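(* Let $f$ be smooth and bistable (there is $\alpha\in(0,1)$ with $f(0)=f(\alpha)=f(1)=0$, $f'(0),f'(1)<0<f'(\alpha)$, $f>0$ on $(-\infty,0)\cup(\alpha,1)$, $f<0$ on $(0,\alpha)\cup(1,\infty)$), $\tau_m=1/\sup_{[0,1]}|f'|$, $\tau\in(0,\tau_m)$, and let $c=c_\ast(\tau)$, $(U,V)$ be the traveling wave speed and profile ($cU'+V'+f(U)=0$, $U'+c\tau V'-V=0$, $(U,V)(-\infty)=(0,0)$, $(U,V)(+\infty)=(1,0)$). Put $a(x)=f'(U(x))$, $a_0=1-c^2\tau$, $a_1(x)=c(1-\tau a(x))$, $a_2(x)=a(x)-c\tau a'(x)$, and $$\mathbf{A}^\tau(x,0)=\frac{1}{1-c^2\tau}\begin{pmatrix}0&1-c^2\tau\\ c\tau a'(x)-a(x)& c(\tau a(x)-1)\end{pmatrix}.$$ Then the adjoint equation $\mathbf{y}_x=-\mathbf{A}^\tau(x,0)^*\mathbf{y}$ has a unique (up to constant multiples) bounded solution $\mathbf{y}_0=(\zeta,\eta)^\top\in H^1(\mathbb{R};\mathbb{C}^2)$, where $\eta\in H^2(\mathbb{R};\mathbb{C})$ is the unique (up to constant multiples) bounded solution of $$\mathcal{A}^*\eta:=a_0\eta_{xx}-a_1(x)\eta_x+(a_2(x)-a_1'(x))\eta=0,$$ $\mathcal{A}^*:H^2(\mathbb{R};\mathbb{C})\to L^2(\mathbb{R};\mathbb{C})$ being the formal adjoint of $\mathcal{A}u:=a_0u_{xx}+a_1(x)u_x+a_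2(x)u$.
   Context: $\mathbf{A}^*$ denotes the conjugate transpose. The system $\mathbf{w}_x=\mathbf{A}^\tau(x,0)\mathbf{w}$, $\mathbf{w}=(u,u_x)$, is the first-order form of the zero-eigenvalue problem for the linearization of $u_t=v_x+f(u)$, $\tau v_t=u_x-v$ around the wave. *)

theory Defs
  imports "HOL-Analysis.Analysis"
begin

definition smooth_fun :: "(real \<Rightarrow> real) \<Rightarrow> bool" where
  "smooth_fun g \<longleftrightarrow> (\<forall>n x. ((deriv ^^ n) g) differentiable (at x))"

definition bistable :: "(real \<Rightarrow> real) \<Rightarrow> bool" where
  "bistable f \<longleftrightarrow> (\<exists>\<alpha>. 0 < \<alpha> \<and> \<alpha> < 1 \<and>
      f 0 = 0 \<and> f \<alpha> = 0 \<and> f 1 = 0 \<and>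
      deriv f 0 < 0 \<and> deriv f 1 < 0 \<and> 0 < deriv f \<alpha> \<and>
      (\<forall>s. (s < 0 \<or> (\<alpha> < s \<and> s < 1)) \<longrightarrow> f s > 0) \<and>
      (\<forall>s. ((0 < s \<and> s < \<alpha>) \<or> 1 < s) \<longrightarrow> f s < 0))"

definition tau_m :: "(real \<Rightarrow> real) \<Rightarrow> real" where
  "tau_m f = 1 / (SUP s\<in>{0..1}. \<bar>deriv f s\<bar>)"

text \<open>Traveling wave (c,U,V) of u_t = v_x + f(u), tau v_t = u_x - v:
  c U' + V' + f(U) = 0, U' + c tau V' - V = 0, (U,V)(-inf)=(0,0), (U,V)(+inf)=(1,0).\<close>
definition traveling_wave ::
  "(real \<Rightarrow> real) \<Rightarrow> real \<Rightarrow> real \<Rightarrow> (real \<Rightarrow> real) \<Rightarrow> (real \<Rightarrow> real) \<Rightarrow> bool" where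
  "traveling_wave f \<tau> c U V \<longleftrightarrow>
     (\<forall>x. U differentiable (at x) \<and> V differentiable (at x)) \<and>
     (\<forall>x. c * deriv U x + deriv V x + f (U x) = 0) \<and>
     (\<forall>x. deriv U x + c * \<tau> * deriv V x - V x = 0) \<and>
     (U \<longlongrightarrow> 0) at_bot \<and> (V \<longlongrightarrow> 0) at_bot \<and>
     (U \<longlongrightarrow> 1) at_top \<and> (V \<longlongrightarrow> 0) at_top"

definition coef_a :: "(real \<Rightarrow> real) \<Rightarrow> (real \<Rightarrow> real) \<Rightarrow> real \<Rightarrow> real" where
  "coef_a f U x = deriv f (U x)"

definition coef_a0 :: "real \<Rightarrow> real \<Rightarrow> real" where
  "coef_a0 \<tau> c = 1 - c\<^sup>2 * \<tau>"

definition coef_a1 :: "(real \<Rightarrow> real) \<Rightarrow> real \<Rightarrow> real \<Rightarrow> (real \<Rightarrow> real) \<Rightarrow> real \<Rightarrow> real" where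
  "coef_a1 f \<tau> c U x = c * (1 - \<tau> * coef_a f U x)"

definition coef_a2 :: "(real \<Rightarrow> real) \<Rightarrow> real \<Rightarrow> real \<Rightarrow> (real \<Rightarrow> real) \<Rightarrow> real \<Rightarrow> real" where
  "coef_a2 f \<tau> c U x = coef_a f U x - c * \<tau> * deriv (coef_a f U) x"

definition A_mat :: "(real \<Rightarrow> real) \<Rightarrow> real \<Rightarrow> real \<Rightarrow> (real \<Rightarrow> real) \<Rightarrow> real \<Rightarrow> complex^2^2" where
  "A_mat f \<tau> c U x = (1 / (1 - c\<^sup>2 * \<tau>)) *\<^sub>R
     (\<chi> i j. complex_of_real
        (if i = 1 then (if j = 1 then 0 else 1 - c\<^sup>2 * \<tau>)
         else (if j = 1 then c * \<tau> * deriv (coef_a f U) x - coef_a f U x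
               else c * (\<tau> * coef_a f U x - 1))))"

definition conj_transpose :: "complex^'n^'m \<Rightarrow> complex^'m^'n" where
  "conj_transpose M = (\<chi> i j. cnj (M $ j $ i))"

definition adjoint_sol ::
  "(real \<Rightarrow> real) \<Rightarrow> real \<Rightarrow> real \<Rightarrow> (real \<Rightarrow> real) \<Rightarrow> (real \<Rightarrow> complex^2) \<Rightarrow> bool" where
  "adjoint_sol f \<tau> c U y \<longleftrightarrow>
     (\<forall>x. (y has_vector_derivative (- (conj_transpose (A_mat f \<tau> c U x) *v y x))) (at x))"

definition Astar_sol ::
  "(real \<Rightarrow> real) \<Rightarrow> real \<Rightarrow> real \<Rightarrow> (real \<Rightarrow> real) \<Rightarrow> (real \<Rightarrow> complex) \<Rightarrow> bool" where
  "Astar_sol f \<tau> c U \<eta> \<longleftrightarrow>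
     (\<exists>\<eta>1 \<eta>2. \<forall>x. (\<eta> has_vector_derivative \<eta>1 x) (at x) \<and>
        (\<eta>1 has_vector_derivative \<eta>2 x) (at x) \<and>
        complex_of_real (coef_a0 \<tau> c) * \<eta>2 x
        - complex_of_real (coef_a1 f \<tau> c U x) * \<eta>1 x
        + complex_of_real (coef_a2 f \<tau> c U x - deriv (coef_a1 f \<tau> c U) x) * \<eta> x = 0)"

definition L2 :: "(real \<Rightarrow> 'a::{banach,second_countable_topology}) \<Rightarrow> bool" where
  "L2 g \<longleftrightarrow> g \<in> borel_measurable lborel \<and> integrable lborel (\<lambda>x. (norm (g x))\<^sup>2)"

definition test_fun :: "(real \<Rightarrow> real) \<Rightarrow> bool" where
  "test_fun \<phi> \<longleftrightarrow> smooth_fun \<phi> \<and> compact (closure {x. \<phi> x \<noteq> 0})"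

definition weak_deriv ::
  "(real \<Rightarrow> 'a::{banach,second_countable_topology}) \<Rightarrow> (real \<Rightarrow> 'a) \<Rightarrow> bool" where
  "weak_deriv g h \<longleftrightarrow> (\<forall>\<phi>. test_fun \<phi> \<longrightarrow>
      (LINT x|lborel. deriv \<phi> x *\<^sub>R g x) = - (LINT x|lborel. \<phi> x *\<^sub>R h x))"

definition H1 :: "(real \<Rightarrow> 'a::{banach,second_countable_topology}) \<Rightarrow> bool" where
  "H1 g \<longleftrightarrow> L2 g \<and> (\<exists>g1. L2 g1 \<and> weak_deriv g g1)"

definition H2 :: "(real \<Rightarrow> 'a::{banach,second_countable_topology}) \<Rightarrow> bool" where
  "H2 g \<longleftrightarrow> L2 g \<and> (\<exists>g1 g2. L2 g1 \<and> L2 g2 \<and> weak_deriv g g1 \<and> weak_deriv g1 g2)"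

end

theory Submission
  imports Defs
begin

lemma exp_growth_le:
  fixes G G' :: "real \<Rightarrow> real"
  assumes "X \<le> x" "\<And>t. X \<le> t \<Longrightarrow> t \<le> x \<Longrightarrow> (G has_real_derivative G' t) (at t)"
    "\<And>t. X \<le> t \<Longrightarrow> t \<le> x \<Longrightarrow> G' t \<le> k * G t"
  shows "G x \<le> G X * exp (k * (x - X))"
proof -
  have "(\<lambda>t. G t * exp (- k * t)) x \<le> (\<lambda>t. G t * exp (- k * t)) X"
  proof (rule DERIV_nonpos_imp_nonincreasing[OF assms(1)])
    fix t assume t: "X \<le> t" "t \<le> x"
    have "((\<lambda>t. G t * exp (- k * t)) has_real_derivative
        G' t * exp (- k * t) + G t * (exp (- k * t) * (- k))) (at t)"
      by (auto intro!: derivative_eq_intros assms(2) t)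
    moreover have "G' t * exp (- k * t) + G t * (exp (- k * t) * (- k)) \<le> 0"
    proof -
      have "G' t * exp (- k * t) \<le> k * G t * exp (- k * t)"
        using assms(3)[OF t] by (simp add: mult_right_mono)
      then show ?thesis by (simp add: algebra_simps)
    qed
    ultimately show "\<exists>y. ((\<lambda>t. G t * exp (- k * t)) has_real_derivative y) (at t) \<and> y \<le> 0" by blast
  qed
  then have "G x * exp (- k * x) * exp (k * x) \<le> G X * exp (- k * X) * exp (k * x)"
    by (simp add: mult_right_mono)
  moreover have "exp (- k * x) * exp (k * x) = 1" by (simp flip: exp_add)
  moreover have "exp (- k * X) * exp (k * x) = exp (k * (x - X))" by (simp add: algebra_simps flip: exp_add)
  ultimately show ?thesis by (metis mult.assoc mult.right_neutral)
qed

lemma exp_growth_ge: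
  fixes G G' :: "real \<Rightarrow> real"
  assumes "X \<le> x" "\<And>t. X \<le> t \<Longrightarrow> t \<le> x \<Longrightarrow> (G has_real_derivative G' t) (at t)"
    "\<And>t. X \<le> t \<Longrightarrow> t \<le> x \<Longrightarrow> G' t \<ge> k * G t"
  shows "G x \<ge> G X * exp (k * (x - X))"
proof -
  have "- G x \<le> - G X * exp (k * (x - X))"
    by (rule exp_growth_le[of X x "\<lambda>t. - G t" "\<lambda>t. - G' t" k])
       (auto intro!: derivative_eq_intros assms)
  then show ?thesis by simp
qed

lemma local_zero_interval:
  fixes E E' :: "real \<Rightarrow> real"
  assumes der: "\<And>t. (E has_real_derivative E' t) (at t)" and nn: "\<And>t. E t \<ge> 0"
    and z: "E x = 0" and r: "r > 0" and L: "\<And>t. \<bar>t - x\<bar> < r \<Longrightarrow> \<bar>E' t\<bar> \<le> L * E t"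
    and t: "\<bar>t - x\<bar> < r"
  shows "E t = 0"
proof (cases "x \<le> t")
  case True
  have "E t \<le> E x * exp (L * (t - x))"
    by (rule exp_growth_le[OF True der]) (use L t in \<open>auto simp: abs_le_iff\<close>)
  then show ?thesis using z nn[of t] by simp
next
  case False
  have "(\<lambda>s. E (- s)) (- t) \<le> (\<lambda>s. E (- s)) (- x) * exp (L * (- t - (- x)))"
  proof (rule exp_growth_le[of "- x" "- t" _ "\<lambda>s. - E' (- s)"])
    fix s assume s: "- x \<le> s" "s \<le> - t"
    show "((\<lambda>s. E (- s)) has_real_derivative - E' (- s)) (at s)"
      using DERIV_chain2[OF der DERIV_minus[OF DERIV_ident]] by simp
    have "\<bar>- s - x\<bar> < r" using s t False by auto
    then show "- E' (- s) \<le> L * E (- s)" using L[of "- s"] by (auto simp: abs_le_iff)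
  qed (use False in auto)
  then show ?thesis using z nn[of t] by simp
qed

lemma zero_all:
  fixes E E' :: "real \<Rightarrow> real"
  assumes der: "\<And>t. (E has_real_derivative E' t) (at t)" and nn: "\<And>t. E t \<ge> 0"
    and z: "E x0 = 0"
    and loc: "\<And>x. E x = 0 \<Longrightarrow> \<exists>r>0. \<exists>L. \<forall>t. \<bar>t - x\<bar> < r \<longrightarrow> \<bar>E' t\<bar> \<le> L * E t"
  shows "E x = 0"
proof -
  let ?S = "{x. E x = 0}"
  have cont: "continuous_on UNIV E" using der
    by (meson DERIV_continuous continuous_at_imp_continuous_on)
  have "closed ?S" using closed_Collect_eq[OF cont continuous_on_const] by simp
  moreover have "open ?S"
  proof (rule openI)
    fix x assume "x \<in> ?S"
    then obtain r L where r: "r > 0" and L: "\<And>t. \<bar>t - x\<bar> < r \<Longrightarrow> \<bar>E' t\<bar> \<le> L * E t"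
      using loc by blast
    have "ball x r \<subseteq> ?S"
    proof
      fix t assume "t \<in> ball x r"
      then have "\<bar>t - x\<bar> < r" by (simp add: dist_real_def abs_minus_commute)
      then show "t \<in> ?S" using local_zero_interval[OF der nn _ r L] \<open>x \<in> ?S\<close> by auto
    qed
    then show "\<exists>e>0. ball x e \<subseteq> ?S" using r by blast
  qed
  ultimately have "?S = {} \<or> ?S = UNIV" using clopen[of ?S] by simp
  then show ?thesis using z by auto
qed


lemma cont_local_bound:
  fixes m :: "real \<Rightarrow> real"
  assumes "continuous_on UNIV m"
  shows "\<exists>M. \<forall>t. \<bar>t - x\<bar> < 1 \<longrightarrow> \<bar>m t\<bar> \<le> M"
proof -
  have "compact (m ` cball x 1)"
    by (rule compact_continuous_image[OF continuous_on_subset[OF assms] compact_cball]) simp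
  then obtain M where M: "\<And>y. y \<in> m ` cball x 1 \<Longrightarrow> norm y \<le> M"
    using compact_imp_bounded bounded_iff by metis
  show ?thesis
  proof (intro exI allI impI)
    fix t assume "\<bar>t - x\<bar> < 1"
    then have "t \<in> cball x 1" by (simp add: dist_real_def abs_minus_commute)
    then show "\<bar>m t\<bar> \<le> M" using M by auto
  qed
qed

lemma lin2_unique:
  fixes u v m11 m12 m21 m22 :: "real \<Rightarrow> real"
  assumes du: "\<And>x. (u has_real_derivative (m11 x * u x + m12 x * v x)) (at x)"
    and dv: "\<And>x. (v has_real_derivative (m21 x * u x + m22 x * v x)) (at x)"
    and c11: "continuous_on UNIV m11" and c12: "continuous_on UNIV m12"
    and c21: "continuous_on UNIV m21" and c22: "continuous_on UNIV m22"
    and z: "u x0 = 0" "v x0 = 0"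
  shows "u x = 0 \<and> v x = 0"
proof -
  define E where "E t = (u t)\<^sup>2 + (v t)\<^sup>2" for t
  define E' where "E' t = 2 * u t * (m11 t * u t + m12 t * v t) + 2 * v t * (m21 t * u t + m22 t * v t)" for t
  have der: "(E has_real_derivative E' t) (at t)" for t
    unfolding E_def E'_def
    by (auto intro!: derivative_eq_intros du dv simp: power2_eq_square)
  have "E x = 0"
  proof (rule zero_all[OF der])
    show "E t \<ge> 0" for t by (simp add: E_def)
    show "E x0 = 0" using z by (simp add: E_def)
    fix y assume "E y = 0"
    obtain M1 where M1: "\<And>t. \<bar>t - y\<bar> < 1 \<Longrightarrow> \<bar>m11 t\<bar> \<le> M1" using cont_local_bound[OF c11] by blast
    obtain M2 where M2: "\<And>t. \<bar>t - y\<bar> < 1 \<Longrightarrow> \<bar>m12 t\<bar> \<le> M2" using cont_local_bound[OF c12] by blast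
    obtain M3 where M3: "\<And>t. \<bar>t - y\<bar> < 1 \<Longrightarrow> \<bar>m21 t\<bar> \<le> M3" using cont_local_bound[OF c21] by blast
    obtain M4 where M4: "\<And>t. \<bar>t - y\<bar> < 1 \<Longrightarrow> \<bar>m22 t\<bar> \<le> M4" using cont_local_bound[OF c22] by blast
    define M where "M = M1 + M2 + M3 + M4"
    have "\<bar>E' t\<bar> \<le> (4 * M) * E t" if t: "\<bar>t - y\<bar> < 1" for t
    proof -
      have b: "\<bar>m11 t\<bar> \<le> M" "\<bar>m12 t\<bar> \<le> M" "\<bar>m21 t\<bar> \<le> M" "\<bar>m22 t\<bar> \<le> M"
        using M1[OF t] M2[OF t] M3[OF t] M4[OF t] unfolding M_def by auto
      have uv: "2 * \<bar>u t\<bar> * \<bar>v t\<bar> \<le> (u t)\<^sup>2 + (v t)\<^sup>2"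
        using sum_squares_bound[of "\<bar>u t\<bar>" "\<bar>v t\<bar>"] by (simp add: power2_eq_square)
      have "\<bar>E' t\<bar> \<le> \<bar>2 * u t * (m11 t * u t)\<bar> + \<bar>2 * u t * (m12 t * v t)\<bar> + \<bar>2 * v t * (m21 t * u t)\<bar> + \<bar>2 * v t * (m22 t * v t)\<bar>"
        unfolding E'_def distrib_left by linarith
      also have "\<dots> = 2 * \<bar>u t\<bar> * (\<bar>m11 t\<bar> * \<bar>u t\<bar> + \<bar>m12 t\<bar> * \<bar>v t\<bar>)
           + 2 * \<bar>v t\<bar> * (\<bar>m21 t\<bar> * \<bar>u t\<bar> + \<bar>m22 t\<bar> * \<bar>v t\<bar>)"
        by (simp add: abs_mult algebra_simps)
      also have "\<dots> \<le> 2 * \<bar>u t\<bar> * (M * \<bar>u t\<bar> + M * \<bar>v t\<bar>) + 2 * \<bar>v t\<bar> * (M * \<bar>u t\<bar> + M * \<bar>v t\<bar>)"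
        by (intro add_mono mult_left_mono mult_right_mono b) auto
      also have "\<dots> = 2 * M * ((u t)\<^sup>2 + (v t)\<^sup>2) + 2 * M * (2 * \<bar>u t\<bar> * \<bar>v t\<bar>)"
        by (simp add: algebra_simps power2_eq_square)
      also have "\<dots> \<le> 2 * M * ((u t)\<^sup>2 + (v t)\<^sup>2) + 2 * M * ((u t)\<^sup>2 + (v t)\<^sup>2)"
      proof -
        have "M \<ge> 0" using b(1) by linarith
        then show ?thesis using uv by (intro add_left_mono mult_left_mono) auto
      qed
      finally show ?thesis by (simp add: E_def)
    qed
    then show "\<exists>r>0. \<exists>L. \<forall>t. \<bar>t - y\<bar> < r \<longrightarrow> \<bar>E' t\<bar> \<le> L * E t"
      by (intro exI[of _ 1] conjI exI[of _ "4 * M"]) auto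
  qed
  then show ?thesis unfolding E_def by (simp add: add_nonneg_eq_0_iff)
qed

lemma has_vector_derivative_Re_Im:
  fixes z :: "real \<Rightarrow> complex"
  assumes "(z has_vector_derivative d) (at x)"
  shows "((\<lambda>t. Re (z t)) has_real_derivative Re d) (at x)"
    and "((\<lambda>t. Im (z t)) has_real_derivative Im d) (at x)"
proof -
  have "((\<lambda>t. Re (z t)) has_derivative (\<lambda>h. Re (h *\<^sub>R d))) (at x)"
    using bounded_linear.has_derivative[OF bounded_linear_Re assms[unfolded has_vector_derivative_def]] .
  then show "((\<lambda>t. Re (z t)) has_real_derivative Re d) (at x)"
    by (simp add: has_real_derivative_iff_has_vector_derivative has_vector_derivative_def)
  have "((\<lambda>t. Im (z t)) has_derivative (\<lambda>h. Im (h *\<^sub>R d))) (at x)"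
    using bounded_linear.has_derivative[OF bounded_linear_Im assms[unfolded has_vector_derivative_def]] .
  then show "((\<lambda>t. Im (z t)) has_real_derivative Im d) (at x)"
    by (simp add: has_real_derivative_iff_has_vector_derivative has_vector_derivative_def)
qed

lemma lin2c_unique:
  fixes z1 z2 :: "real \<Rightarrow> complex" and m11 m12 m21 m22 :: "real \<Rightarrow> real"
  assumes d1: "\<And>x. (z1 has_vector_derivative (of_real (m11 x) * z1 x + of_real (m12 x) * z2 x)) (at x)"
    and d2: "\<And>x. (z2 has_vector_derivative (of_real (m21 x) * z1 x + of_real (m22 x) * z2 x)) (at x)"
    and c11: "continuous_on UNIV m11" and c12: "continuous_on UNIV m12"
    and c21: "continuous_on UNIV m21" and c22: "continuous_on UNIV m22"
    and z: "z1 x0 = 0" "z2 x0 = 0"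
  shows "z1 x = 0 \<and> z2 x = 0"
proof -
  have "Re (z1 x) = 0 \<and> Re (z2 x) = 0"
    by (rule lin2_unique[of "\<lambda>t. Re (z1 t)" m11 m12 "\<lambda>t. Re (z2 t)" m21 m22 x0, OF _ _ c11 c12 c21 c22])
       (use has_vector_derivative_Re_Im(1)[OF d1] has_vector_derivative_Re_Im(1)[OF d2] z in auto)
  moreover have "Im (z1 x) = 0 \<and> Im (z2 x) = 0"
    by (rule lin2_unique[of "\<lambda>t. Im (z1 t)" m11 m12 "\<lambda>t. Im (z2 t)" m21 m22 x0, OF _ _ c11 c12 c21 c22])
       (use has_vector_derivative_Re_Im(2)[OF d1] has_vector_derivative_Re_Im(2)[OF d2] z in auto)
  ultimately show ?thesis by (simp add: complex_eq_iff)
qed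


lemma ab_bound:
  fixes a b s :: real
  assumes "s > 0"
  shows "2 * \<bar>a * b\<bar> \<le> s * a\<^sup>2 + b\<^sup>2 / s"
proof -
  have "0 \<le> (s * \<bar>a\<bar> - \<bar>b\<bar>)\<^sup>2" by simp
  then have "2 * s * \<bar>a\<bar> * \<bar>b\<bar> \<le> s\<^sup>2 * a\<^sup>2 + b\<^sup>2"
    by (simp add: power2_eq_square algebra_simps)
  then have "(2 * \<bar>a * b\<bar>) * s \<le> (s * a\<^sup>2 + b\<^sup>2 / s) * s"
    using assms by (simp add: abs_mult power2_eq_square algebra_simps)
  then show ?thesis using assms by (simp add: mult_le_cancel_right)
qed

lemma eventually_first:
  fixes F :: "real \<Rightarrow> real"
  assumes "(F \<longlongrightarrow> 0) at_top" "F x1 > 0"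
  shows "\<exists>x\<ge>x1. F x < F x1"
proof -
  have "eventually (\<lambda>x. F x < F x1) at_top"
    using order_tendstoD(2)[OF assms(1) assms(2)] .
  then obtain N where "\<And>x. x \<ge> N \<Longrightarrow> F x < F x1" by (auto simp: eventually_at_top_linorder)
  then show ?thesis by (intro exI[of _ "max N x1"]) auto
qed

lemma companion_decay:
  fixes w1 w2 p q E :: "real \<Rightarrow> real"
  assumes d1: "\<And>x. x \<ge> X0 \<Longrightarrow> (w1 has_real_derivative w2 x) (at x)"
    and d2: "\<And>x. x \<ge> X0 \<Longrightarrow> (w2 has_real_derivative (- (p x * w1 x) - q x * w2 x)) (at x)"
    and dE: "\<And>x. x \<ge> X0 \<Longrightarrow> (E has_real_derivative q x * E x) (at x)"
    and Epos: "\<And>x. E x > 0"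
    and lp: "(p \<longlongrightarrow> pinf) at_top" and lq: "(q \<longlongrightarrow> qinf) at_top" and pneg: "pinf < 0"
    and l1: "(w1 \<longlongrightarrow> 0) at_top" and l2: "(w2 \<longlongrightarrow> 0) at_top"
  shows "\<exists>K \<kappa> X. \<kappa> > 0 \<and> (\<forall>x\<ge>X. (E x * w1 x)\<^sup>2 + (E x * w2 x)\<^sup>2 \<le> K * exp (- \<kappa> * x))"
proof -
  define D where "D = sqrt (qinf\<^sup>2 - 4 * pinf)"
  have Dnn: "0 \<le> qinf\<^sup>2 - 4 * pinf" using pneg by (smt (verit) zero_le_power2)
  have D2: "D\<^sup>2 = qinf\<^sup>2 - 4 * pinf" unfolding D_def using Dnn by simp
  have Dq: "D > \<bar>qinf\<bar>"
  proof -
    have "sqrt (qinf\<^sup>2) < sqrt (qinf\<^sup>2 - 4 * pinf)" using pneg by (intro real_sqrt_less_mono) simp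
    then show ?thesis unfolding D_def by simp
  qed
  define l1 where "l1 = (- qinf - D) / 2"
  define l2 where "l2 = (- qinf + D) / 2"
  have l1neg: "l1 < 0" and l2pos: "l2 > 0" using Dq by (auto simp: l1_def l2_def)
  have Dpos: "D > 0" using Dq by linarith
  have sum: "l1 + l2 = - qinf" and prod: "l1 * l2 = pinf" and diff: "l2 - l1 = D"
    using D2 by (auto simp: l1_def l2_def field_simps power2_eq_square)
  have qeq: "qinf = - (l1 + l2)" using sum by simp
  define \<alpha> where "\<alpha> x = (l2 * w1 x - w2 x) / D" for x
  define \<beta> where "\<beta> x = (w2 x - l1 * w1 x) / D" for x
  have w1ab: "w1 x = \<alpha> x + \<beta> x" for x
    using Dpos diff by (simp add: \<alpha>_def \<beta>_def field_simps)
  have w2ab: "w2 x = l1 * \<alpha> x + l2 * \<beta> x" for x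
    using Dpos diff by (simp add: \<alpha>_def \<beta>_def field_simps)
  define r where "r x = ((p x - pinf) * w1 x + (q x - qinf) * w2 x) / D" for x
  have da: "(\<alpha> has_real_derivative l1 * \<alpha> x + r x) (at x)" if "x \<ge> X0" for x
  proof -
    have "(\<alpha> has_real_derivative (l2 * w2 x - (- (p x * w1 x) - q x * w2 x)) / D) (at x)"
      unfolding \<alpha>_def using Dpos by (auto intro!: derivative_eq_intros d1 d2 that)
    moreover have "(l2 * w2 x - (- (p x * w1 x) - q x * w2 x)) / D = l1 * \<alpha> x + r x"
    proof -
      have "l2 * w2 x - (- (p x * w1 x) - q x * w2 x)
          = l1 * (l2 * w1 x - w2 x) + ((p x - pinf) * w1 x + (q x - qinf) * w2 x)"
        unfolding qeq prod[symmetric] by (simp add: algebra_simps)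
      then show ?thesis by (simp add: \<alpha>_def r_def add_divide_distrib)
    qed
    ultimately show ?thesis by simp
  qed
  have db: "(\<beta> has_real_derivative l2 * \<beta> x - r x) (at x)" if "x \<ge> X0" for x
  proof -
    have "(\<beta> has_real_derivative ((- (p x * w1 x) - q x * w2 x) - l1 * w2 x) / D) (at x)"
      unfolding \<beta>_def using Dpos by (auto intro!: derivative_eq_intros d1 d2 that)
    moreover have "((- (p x * w1 x) - q x * w2 x) - l1 * w2 x) / D = l2 * \<beta> x - r x"
    proof -
      have "(- (p x * w1 x) - q x * w2 x) - l1 * w2 x
          = l2 * (w2 x - l1 * w1 x) - ((p x - pinf) * w1 x + (q x - qinf) * w2 x)"
        unfolding qeq prod[symmetric] by (simp add: algebra_simps)
      then show ?thesis by (simp add: \<beta>_def r_def diff_divide_distrib right_diff_distrib)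
    qed
    ultimately show ?thesis by simp
  qed
  define m where "m = min l2 (- l1)"
  have mpos: "m > 0" using l1neg l2pos by (simp add: m_def)
  define \<eta> where "\<eta> = l2 / 2"
  define \<delta> where "\<delta> = l2 / 4"
  define \<theta> where "\<theta> = min (m\<^sup>2 / 4) (\<eta>\<^sup>2 / 8)"
  define \<Lambda> where "\<Lambda> = l1\<^sup>2 + l2\<^sup>2"
  define \<epsilon> where "\<epsilon> = min \<delta> (min 1 (\<theta> * D\<^sup>2 / (4 * (1 + \<Lambda>))))"
  have etapos: "\<eta> > 0" and deltapos: "\<delta> > 0" using l2pos by (auto simp: \<eta>_def \<delta>_def)
  have thetapos: "\<theta> > 0" using mpos etapos by (simp add: \<theta>_def)
  have Lnn: "\<Lambda> \<ge> 0" by (simp add: \<Lambda>_def)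
  have epspos: "\<epsilon> > 0" using deltapos thetapos Dpos Lnn by (simp add: \<epsilon>_def)
  have eps1: "\<epsilon> \<le> 1" and epsd: "\<epsilon> \<le> \<delta>" and epst: "\<epsilon> \<le> \<theta> * D\<^sup>2 / (4 * (1 + \<Lambda>))"
    by (auto simp: \<epsilon>_def)
  have ev: "eventually (\<lambda>x. dist (p x) pinf < \<epsilon> \<and> dist (q x) qinf < \<epsilon>) at_top"
    using lp lq epspos by (auto simp: tendsto_iff intro: eventually_conj)
  then obtain N where N: "\<And>x. x \<ge> N \<Longrightarrow> dist (p x) pinf < \<epsilon> \<and> dist (q x) qinf < \<epsilon>"
    by (auto simp: eventually_at_top_linorder)
  define X1 where "X1 = max N X0"
  have X1: "\<bar>p x - pinf\<bar> \<le> \<epsilon>" "\<bar>q x - qinf\<bar> \<le> \<epsilon>" if "x \<ge> X1" for x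
    using N[of x] that by (auto simp: X1_def dist_real_def)
  have X10: "X1 \<ge> X0" by (simp add: X1_def)
  have Sab: "(w1 x)\<^sup>2 + (w2 x)\<^sup>2 \<le> (2 + 2 * \<Lambda>) * ((\<alpha> x)\<^sup>2 + (\<beta> x)\<^sup>2)" for x
  proof -
    have a: "(w1 x)\<^sup>2 \<le> 2 * ((\<alpha> x)\<^sup>2 + (\<beta> x)\<^sup>2)"
      unfolding w1ab by (smt (verit) power2_sum sum_squares_bound)
    have "(w2 x)\<^sup>2 \<le> 2 * ((l1 * \<alpha> x)\<^sup>2 + (l2 * \<beta> x)\<^sup>2)"
      unfolding w2ab by (smt (verit) power2_sum sum_squares_bound)
    also have "\<dots> = 2 * (l1\<^sup>2 * (\<alpha> x)\<^sup>2 + l2\<^sup>2 * (\<beta> x)\<^sup>2)" by (simp add: power_mult_distrib)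
    also have "\<dots> \<le> 2 * (\<Lambda> * (\<alpha> x)\<^sup>2 + \<Lambda> * (\<beta> x)\<^sup>2)"
      unfolding \<Lambda>_def by (intro mult_left_mono add_mono mult_right_mono) auto
    finally show ?thesis using a by (simp add: algebra_simps)
  qed
  have rb: "(r x)\<^sup>2 \<le> \<theta> * ((\<alpha> x)\<^sup>2 + (\<beta> x)\<^sup>2)" if x: "x \<ge> X1" for x
  proof -
    let ?S = "(\<alpha> x)\<^sup>2 + (\<beta> x)\<^sup>2"
    have Snn: "?S \<ge> 0" by simp
    have "((p x - pinf) * w1 x + (q x - qinf) * w2 x)\<^sup>2 \<le> 2 * (((p x - pinf) * w1 x)\<^sup>2 + ((q x - qinf) * w2 x)\<^sup>2)"
      by (smt (verit) power2_sum sum_squares_bound)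
    also have "\<dots> = 2 * ((p x - pinf)\<^sup>2 * (w1 x)\<^sup>2 + (q x - qinf)\<^sup>2 * (w2 x)\<^sup>2)" by (simp add: power_mult_distrib)
    also have "\<dots> \<le> 2 * (\<epsilon>\<^sup>2 * (w1 x)\<^sup>2 + \<epsilon>\<^sup>2 * (w2 x)\<^sup>2)"
    proof -
      have "(p x - pinf)\<^sup>2 \<le> \<epsilon>\<^sup>2" "(q x - qinf)\<^sup>2 \<le> \<epsilon>\<^sup>2"
        using X1[OF x] using epspos by (auto simp: power2_le_iff_abs_le less_imp_le)
      then show ?thesis by (intro mult_left_mono add_mono mult_right_mono) auto
    qed
    also have "\<dots> = 2 * \<epsilon>\<^sup>2 * ((w1 x)\<^sup>2 + (w2 x)\<^sup>2)" by (simp add: algebra_simps)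
    also have "\<dots> \<le> 2 * \<epsilon> * ((2 + 2 * \<Lambda>) * ?S)"
    proof -
      have "\<epsilon>\<^sup>2 \<le> \<epsilon>" using eps1 epspos by (simp add: power2_eq_square mult_left_le)
      then show ?thesis using Sab[of x] epspos
        by (intro mult_mono) (auto simp: add_nonneg_nonneg)
    qed
    also have "\<dots> = (4 * (1 + \<Lambda>)) * \<epsilon> * ?S" by (simp add: algebra_simps)
    also have "\<dots> \<le> (4 * (1 + \<Lambda>)) * (\<theta> * D\<^sup>2 / (4 * (1 + \<Lambda>))) * ?S"
      using epst Lnn Snn by (intro mult_right_mono mult_left_mono) auto
    also have "\<dots> = \<theta> * D\<^sup>2 * ?S" using Lnn by simp
    finally have "((p x - pinf) * w1 x + (q x - qinf) * w2 x)\<^sup>2 \<le> \<theta> * D\<^sup>2 * ?S" .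
    then show ?thesis using Dpos by (simp add: r_def power_divide divide_le_eq algebra_simps)
  qed
  define F where "F x = (\<beta> x)\<^sup>2 - (\<alpha> x)\<^sup>2" for x
  define F' where "F' x = 2 * \<beta> x * (l2 * \<beta> x - r x) - 2 * \<alpha> x * (l1 * \<alpha> x + r x)" for x
  have dF: "(F has_real_derivative F' x) (at x)" if "x \<ge> X0" for x
    unfolding F_def F'_def
    by (auto intro!: derivative_eq_intros da db that simp: power2_eq_square)
  have F'b: "F' x \<ge> (m / 2) * F x" if x: "x \<ge> X1" for x
  proof -
    let ?S = "(\<alpha> x)\<^sup>2 + (\<beta> x)\<^sup>2"
    have "2 * \<bar>(\<alpha> x + \<beta> x) * r x\<bar> \<le> (m / 2) * (\<alpha> x + \<beta> x)\<^sup>2 + (r x)\<^sup>2 / (m / 2)"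
      using ab_bound[of "m / 2" "\<alpha> x + \<beta> x" "r x"] mpos by simp
    also have "\<dots> \<le> (m / 2) * (2 * ?S) + (\<theta> * ?S) / (m / 2)"
    proof (intro add_mono divide_right_mono mult_left_mono)
      show "(\<alpha> x + \<beta> x)\<^sup>2 \<le> 2 * ?S" by (smt (verit) power2_sum sum_squares_bound)
    qed (use rb[OF x] mpos in auto)
    also have "\<dots> \<le> m * ?S + (m / 2) * ?S"
    proof -
      have "\<theta> \<le> m\<^sup>2 / 4" by (simp add: \<theta>_def)
      then have "\<theta> / (m / 2) \<le> m / 2" using mpos by (simp add: divide_le_eq power2_eq_square)
      then have t: "\<theta> * ?S / (m / 2) \<le> (m / 2) * ?S"
        by (metis mult_right_mono times_divide_eq_left zero_le_power2 add_nonneg_nonneg mult.commute)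
      have e: "(m / 2) * (2 * ?S) = m * ?S" by simp
      from t e show ?thesis by linarith
    qed
    finally have c: "2 * \<bar>(\<alpha> x + \<beta> x) * r x\<bar> \<le> (3 * m / 2) * ?S" by (simp add: algebra_simps)
    have "2 * l2 * (\<beta> x)\<^sup>2 - 2 * l1 * (\<alpha> x)\<^sup>2 \<ge> 2 * m * ?S"
    proof -
      have "m * (\<beta> x)\<^sup>2 \<le> l2 * (\<beta> x)\<^sup>2" "m * (\<alpha> x)\<^sup>2 \<le> (- l1) * (\<alpha> x)\<^sup>2"
        by (intro mult_right_mono; simp add: m_def)+
      then show ?thesis by (simp add: algebra_simps)
    qed
    moreover have "F' x = 2 * l2 * (\<beta> x)\<^sup>2 - 2 * l1 * (\<alpha> x)\<^sup>2 - 2 * ((\<alpha> x + \<beta> x) * r x)"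
      by (simp add: F'_def algebra_simps power2_eq_square)
    moreover have e2: "m / 2 * ?S = 2 * m * ?S - 3 * m / 2 * ?S" by (simp add: algebra_simps)
    moreover have "(\<alpha> x + \<beta> x) * r x \<le> \<bar>(\<alpha> x + \<beta> x) * r x\<bar>" by simp
    ultimately have "F' x \<ge> (m / 2) * ?S" using c by linarith
    moreover have "(m / 2) * ?S \<ge> (m / 2) * F x" using mpos by (intro mult_left_mono) (auto simp: F_def)
    ultimately show ?thesis by linarith
  qed
  have lab: "(\<alpha> \<longlongrightarrow> 0) at_top" "(\<beta> \<longlongrightarrow> 0) at_top"
    unfolding \<alpha>_def \<beta>_def
    using Dpos by (auto intro!: tendsto_eq_intros l1 l2)
  have lF: "(F \<longlongrightarrow> 0) at_top" unfolding F_def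
    by (auto intro!: tendsto_eq_intros lab)
  have Fle: "F x \<le> 0" if x: "x \<ge> X1" for x
  proof (rule ccontr)
    assume "\<not> F x \<le> 0"
    then have Fx: "F x > 0" by simp
    obtain y where y: "y \<ge> x" "F y < F x" using eventually_first[OF lF Fx] by blast
    have "F y \<ge> F x * exp ((m / 2) * (y - x))"
        by (rule exp_growth_ge[OF y(1), of F F']) (use dF F'b x X10 in auto)
    moreover have "exp ((m / 2) * (y - x)) \<ge> 1" using mpos y(1) by simp
    ultimately have "F y \<ge> F x" using Fx by (smt (verit) mult_le_cancel_left1)
    then show False using y(2) by simp
  qed
  define G where "G x = (\<alpha> x)\<^sup>2" for x
  have Gb: "G x \<le> G X1 * exp ((2 * l1 + \<eta>) * (x - X1))" if x: "x \<ge> X1" for x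
  proof (rule exp_growth_le[OF x, of G "\<lambda>t. 2 * \<alpha> t * (l1 * \<alpha> t + r t)"])
    fix t assume t: "X1 \<le> t" "t \<le> x"
    show "(G has_real_derivative 2 * \<alpha> t * (l1 * \<alpha> t + r t)) (at t)"
      unfolding G_def using t X10 by (auto intro!: derivative_eq_intros da simp: power2_eq_square)
    have ba: "(\<beta> t)\<^sup>2 \<le> (\<alpha> t)\<^sup>2" using Fle[of t] t by (simp add: F_def)
    have "2 * \<bar>\<alpha> t * r t\<bar> \<le> (\<eta> / 2) * (\<alpha> t)\<^sup>2 + (r t)\<^sup>2 / (\<eta> / 2)"
      using ab_bound[of "\<eta> / 2" "\<alpha> t" "r t"] etapos by simp
    also have "\<dots> \<le> (\<eta> / 2) * (\<alpha> t)\<^sup>2 + (\<theta> * (2 * (\<alpha> t)\<^sup>2)) / (\<eta> / 2)"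
    proof -
      have "(r t)\<^sup>2 \<le> \<theta> * (2 * (\<alpha> t)\<^sup>2)"
        using rb[of t] t ba thetapos by (smt (verit) mult_left_mono)
      then show ?thesis using etapos by (intro add_left_mono divide_right_mono) auto
    qed
    also have "\<dots> \<le> \<eta> * (\<alpha> t)\<^sup>2"
    proof -
      have th: "\<theta> \<le> \<eta>\<^sup>2 / 8" by (simp add: \<theta>_def)
      have "(\<theta> * (2 * (\<alpha> t)\<^sup>2)) / (\<eta> / 2) = (4 * \<theta> / \<eta>) * (\<alpha> t)\<^sup>2"
        using etapos by (simp add: field_simps)
      also have "\<dots> \<le> (\<eta> / 2) * (\<alpha> t)\<^sup>2"
      proof (rule mult_right_mono)
        show "4 * \<theta> / \<eta> \<le> \<eta> / 2" using th etapos by (simp add: divide_le_eq power2_eq_square)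
      qed simp
      finally show ?thesis by simp
    qed
    finally have "2 * \<bar>\<alpha> t * r t\<bar> \<le> \<eta> * (\<alpha> t)\<^sup>2" .
    moreover have "2 * \<alpha> t * (l1 * \<alpha> t + r t) = 2 * l1 * (\<alpha> t)\<^sup>2 + 2 * (\<alpha> t * r t)"
      by (simp add: algebra_simps power2_eq_square)
    moreover have "(2 * l1 + \<eta>) * G t = 2 * l1 * (\<alpha> t)\<^sup>2 + \<eta> * (\<alpha> t)\<^sup>2"
      by (simp add: G_def algebra_simps)
    moreover have "\<alpha> t * r t \<le> \<bar>\<alpha> t * r t\<bar>" by simp
    ultimately show "2 * \<alpha> t * (l1 * \<alpha> t + r t) \<le> (2 * l1 + \<eta>) * G t" by linarith
  qed
  have Eb: "E x \<le> E X1 * exp ((qinf + \<delta>) * (x - X1))" if x: "x \<ge> X1" for x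
  proof (rule exp_growth_le[OF x, of E "\<lambda>t. q t * E t"])
    fix t assume t: "X1 \<le> t" "t \<le> x"
    show "(E has_real_derivative q t * E t) (at t)" using dE[of t] t X10 by simp
    have "q t \<le> qinf + \<delta>" using X1(2)[of t] t epsd by (simp add: abs_le_iff)
    then show "q t * E t \<le> (qinf + \<delta>) * E t" using Epos[of t] by (simp add: mult_right_mono)
  qed
  define K where "K = (4 + 4 * \<Lambda>) * (E X1)\<^sup>2 * G X1 * exp (l2 * X1)"
  show ?thesis
  proof (intro exI conjI allI impI)
    show "l2 > 0" by (rule l2pos)
    fix x assume x: "x \<ge> X1"
    have ba: "(\<beta> x)\<^sup>2 \<le> (\<alpha> x)\<^sup>2" using Fle[OF x] by (simp add: F_def)
    have "(E x * w1 x)\<^sup>2 + (E x * w2 x)\<^sup>2 = (E x)\<^sup>2 * ((w1 x)\<^sup>2 + (w2 x)\<^sup>2)"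
      by (simp add: power_mult_distrib algebra_simps)
    also have "\<dots> \<le> (E x)\<^sup>2 * ((2 + 2 * \<Lambda>) * (2 * G x))"
    proof (rule mult_left_mono)
      have "(\<alpha> x)\<^sup>2 + (\<beta> x)\<^sup>2 \<le> 2 * G x" using ba by (simp add: G_def)
      then show "(w1 x)\<^sup>2 + (w2 x)\<^sup>2 \<le> (2 + 2 * \<Lambda>) * (2 * G x)"
        using Sab[of x] Lnn by (smt (verit) mult_left_mono)
    qed simp
    also have "\<dots> \<le> (E X1 * exp ((qinf + \<delta>) * (x - X1)))\<^sup>2 * ((2 + 2 * \<Lambda>) * (2 * (G X1 * exp ((2 * l1 + \<eta>) * (x - X1)))))"
    proof (rule mult_mono)
      show "(E x)\<^sup>2 \<le> (E X1 * exp ((qinf + \<delta>) * (x - X1)))\<^sup>2"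
        by (rule power_mono[OF Eb[OF x]]) (use Epos[of x] in auto)
      show "(2 + 2 * \<Lambda>) * (2 * G x) \<le> (2 + 2 * \<Lambda>) * (2 * (G X1 * exp ((2 * l1 + \<eta>) * (x - X1))))"
        using Gb[OF x] Lnn by (intro mult_left_mono) auto
    qed (use Epos[of x] Lnn in \<open>auto simp: G_def\<close>)
    also have "\<dots> = (4 + 4 * \<Lambda>) * (E X1)\<^sup>2 * G X1 * (exp ((qinf + \<delta>) * (x - X1)) ^ 2 * exp ((2 * l1 + \<eta>) * (x - X1)))"
      by (simp add: power_mult_distrib algebra_simps)
    also have "exp ((qinf + \<delta>) * (x - X1)) ^ 2 * exp ((2 * l1 + \<eta>) * (x - X1)) = exp (l2 * X1) * exp (- l2 * x)"
    proof -
      have "exp ((qinf + \<delta>) * (x - X1)) ^ 2 = exp (2 * ((qinf + \<delta>) * (x - X1)))"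
        by (simp add: power2_eq_square flip: exp_add)
      moreover have "2 * ((qinf + \<delta>) * (x - X1)) + (2 * l1 + \<eta>) * (x - X1) = l2 * X1 + (- l2 * x)"
        unfolding qeq \<delta>_def \<eta>_def by (simp add: field_simps)
      ultimately show ?thesis by (simp flip: exp_add)
    qed
    finally show "(E x * w1 x)\<^sup>2 + (E x * w2 x)\<^sup>2 \<le> K * exp (- l2 * x)"
      by (simp add: K_def algebra_simps)
  qed
qed

lemma sum_sq_le2:
  fixes x y :: real
  shows "(x + y)\<^sup>2 \<le> 2 * (x\<^sup>2 + y\<^sup>2)"
proof -
  have "0 \<le> (x - y)\<^sup>2" by simp
  then show ?thesis by (simp add: power2_eq_square algebra_simps)
qed

lemma companion_grow:
  fixes w1 w2 p q :: "real \<Rightarrow> real"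
  assumes d1: "\<And>x. x \<ge> X0 \<Longrightarrow> (w1 has_real_derivative w2 x) (at x)"
    and d2: "\<And>x. x \<ge> X0 \<Longrightarrow> (w2 has_real_derivative (- (p x * w1 x) - q x * w2 x)) (at x)"
    and lp: "(p \<longlongrightarrow> P) at_top" and lq: "(q \<longlongrightarrow> - Q) at_top" and Ppos: "P > 0" and Qpos: "Q > 0"
    and l1: "(w1 \<longlongrightarrow> 0) at_top" and l2: "(w2 \<longlongrightarrow> 0) at_top"
  shows "\<exists>x\<ge>X0. w1 x = 0 \<and> w2 x = 0"
proof -
  define s where "s = Q * P / (P + Q\<^sup>2)"
  have PQ: "P + Q\<^sup>2 > 0" using Ppos by (simp add: add_pos_nonneg)
  have spos: "s > 0" using Ppos Qpos PQ by (simp add: s_def)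
  have s2: "s\<^sup>2 \<le> P"
  proof -
    have "4 * (Q\<^sup>2 * P) \<le> (P + Q\<^sup>2)\<^sup>2" using zero_le_power2[of "P - Q\<^sup>2"]
      by (simp add: power2_eq_square algebra_simps)
    moreover have "0 \<le> Q\<^sup>2 * P" using Ppos by simp
    ultimately have "Q\<^sup>2 * P \<le> (P + Q\<^sup>2)\<^sup>2" by linarith
    then have "P * (Q\<^sup>2 * P) \<le> P * (P + Q\<^sup>2)\<^sup>2" using Ppos by (simp add: mult_left_mono)
    moreover have "(Q * P)\<^sup>2 = P * (Q\<^sup>2 * P)" by (simp add: power2_eq_square algebra_simps)
    ultimately have a: "(Q * P)\<^sup>2 \<le> P * (P + Q\<^sup>2)\<^sup>2" by simp
    have d: "(P + Q\<^sup>2)\<^sup>2 > 0" using PQ by simp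
    have "(Q * P)\<^sup>2 / (P + Q\<^sup>2)\<^sup>2 \<le> P" using a d by (simp add: pos_divide_le_eq)
    then show ?thesis by (simp add: s_def power_divide)
  qed
  have skey: "s + s * Q\<^sup>2 / (2 * P) \<le> Q"
  proof -
    have "Q * P * (2 * P + Q\<^sup>2) \<le> (2 * P * Q) * (P + Q\<^sup>2)"
    proof -
      have "0 \<le> P * Q * Q\<^sup>2" using Ppos Qpos by simp
      then show ?thesis by (simp add: algebra_simps power2_eq_square)
    qed
    then have "Q * P * (2 * P + Q\<^sup>2) / (P + Q\<^sup>2) \<le> 2 * P * Q" using PQ by (simp add: pos_divide_le_eq)
    then have a: "s * (2 * P + Q\<^sup>2) \<le> 2 * P * Q" by (simp add: s_def)
    have "s + s * Q\<^sup>2 / (2 * P) = s * (2 * P + Q\<^sup>2) / (2 * P)" using Ppos by (simp add: field_simps)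
    also have "\<dots> \<le> (2 * P * Q) / (2 * P)" using a Ppos by (intro divide_right_mono) auto
    also have "\<dots> = Q" using Ppos by simp
    finally show ?thesis .
  qed
  define \<kappa>0 where "\<kappa>0 = min Q (s * P / 2)"
  have k0: "\<kappa>0 > 0" using Qpos spos Ppos by (simp add: \<kappa>0_def)
  define \<epsilon> where "\<epsilon> = \<kappa>0 / (4 * (2 + s))"
  have epspos: "\<epsilon> > 0" using k0 spos by (simp add: \<epsilon>_def)
  have ev: "eventually (\<lambda>x. dist (p x) P < \<epsilon> \<and> dist (q x) (- Q) < \<epsilon>) at_top"
    using lp lq epspos by (auto simp: tendsto_iff intro: eventually_conj)
  then obtain N where N: "\<And>x. x \<ge> N \<Longrightarrow> dist (p x) P < \<epsilon> \<and> dist (q x) (- Q) < \<epsilon>"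
    by (auto simp: eventually_at_top_linorder)
  define X1 where "X1 = max N X0"
  have X1: "\<bar>p x - P\<bar> \<le> \<epsilon>" "\<bar>q x + Q\<bar> \<le> \<epsilon>" if "x \<ge> X1" for x
    using N[of x] that by (auto simp: X1_def dist_real_def)
  have X10: "X1 \<ge> X0" by (simp add: X1_def)
  define H where "H x = P * (w1 x)\<^sup>2 + (w2 x)\<^sup>2 - s * (w1 x * w2 x)" for x
  define H' where "H' x = 2 * P * w1 x * w2 x + 2 * w2 x * (- (p x * w1 x) - q x * w2 x)
       - s * (w2 x * w2 x + w1 x * (- (p x * w1 x) - q x * w2 x))" for x
  have dH: "(H has_real_derivative H' x) (at x)" if "x \<ge> X0" for x
    unfolding H_def H'_def by (auto intro!: derivative_eq_intros d1 d2 that simp: power2_eq_square algebra_simps)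
  have Hlow: "H x \<ge> P / 2 * (w1 x)\<^sup>2 + 1 / 2 * (w2 x)\<^sup>2" for x
  proof -
    have "2 * \<bar>w1 x * w2 x\<bar> \<le> (P / s) * (w1 x)\<^sup>2 + (w2 x)\<^sup>2 / (P / s)"
      using ab_bound[of "P / s" "w1 x" "w2 x"] Ppos spos by simp
    then have "s * (2 * \<bar>w1 x * w2 x\<bar>) \<le> s * ((P / s) * (w1 x)\<^sup>2 + (w2 x)\<^sup>2 / (P / s))"
      using spos by simp
    also have "\<dots> = P * (w1 x)\<^sup>2 + (s\<^sup>2 / P) * (w2 x)\<^sup>2" using spos Ppos by (simp add: field_simps power2_eq_square)
    also have "\<dots> \<le> P * (w1 x)\<^sup>2 + 1 * (w2 x)\<^sup>2"
      using s2 Ppos by (intro add_left_mono mult_right_mono) (auto simp: divide_le_eq)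
    finally have "s * \<bar>w1 x * w2 x\<bar> \<le> P / 2 * (w1 x)\<^sup>2 + 1 / 2 * (w2 x)\<^sup>2" by simp
    moreover have "s * (w1 x * w2 x) \<le> s * \<bar>w1 x * w2 x\<bar>" using spos by (simp add: mult_left_mono)
    ultimately show ?thesis unfolding H_def by linarith
  qed
  have Hup: "H x \<le> (P + 1 + s) * ((w1 x)\<^sup>2 + (w2 x)\<^sup>2)" for x
  proof -
    have "2 * \<bar>w1 x * w2 x\<bar> \<le> 1 * (w1 x)\<^sup>2 + (w2 x)\<^sup>2 / 1" using ab_bound[of 1] by simp
    moreover have "- (w1 x * w2 x) \<le> \<bar>w1 x * w2 x\<bar>" by simp
    moreover have "0 \<le> (w1 x)\<^sup>2 + (w2 x)\<^sup>2" by simp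
    ultimately have "- (w1 x * w2 x) \<le> (w1 x)\<^sup>2 + (w2 x)\<^sup>2" by linarith
    then have "s * (- (w1 x * w2 x)) \<le> s * ((w1 x)\<^sup>2 + (w2 x)\<^sup>2)"
      using spos by (intro mult_left_mono) auto
    then have "- (s * (w1 x * w2 x)) \<le> s * ((w1 x)\<^sup>2 + (w2 x)\<^sup>2)" by simp
    moreover have "0 \<le> P * (w2 x)\<^sup>2" "0 \<le> (w1 x)\<^sup>2" using Ppos by auto
    ultimately show ?thesis unfolding H_def by (simp add: algebra_simps)
  qed
  have H'b: "H' x \<ge> (\<kappa>0 / 2) * ((w1 x)\<^sup>2 + (w2 x)\<^sup>2)" if x: "x \<ge> X1" for x
  proof -
    let ?S = "(w1 x)\<^sup>2 + (w2 x)\<^sup>2"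
    define e where "e = - ((p x - P) * w1 x + (q x + Q) * w2 x)"
    have Hid: "H' x = s * P * (w1 x)\<^sup>2 + (2 * Q - s) * (w2 x)\<^sup>2 - s * Q * (w1 x * w2 x) + (2 * w2 x - s * w1 x) * e"
      unfolding H'_def e_def by (simp add: algebra_simps power2_eq_square)
    have cross: "s * Q * \<bar>w1 x * w2 x\<bar> \<le> s * P / 2 * (w1 x)\<^sup>2 + s * Q\<^sup>2 / (2 * P) * (w2 x)\<^sup>2"
    proof -
      have "2 * \<bar>w1 x * w2 x\<bar> \<le> (P / Q) * (w1 x)\<^sup>2 + (w2 x)\<^sup>2 / (P / Q)"
        using ab_bound[of "P / Q" "w1 x" "w2 x"] Ppos Qpos by simp
      then have m: "(s * Q / 2) * (2 * \<bar>w1 x * w2 x\<bar>) \<le> (s * Q / 2) * ((P / Q) * (w1 x)\<^sup>2 + (w2 x)\<^sup>2 / (P / Q))"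
        using spos Qpos by (intro mult_left_mono) auto
      have e1: "(s * Q / 2) * ((P / Q) * (w1 x)\<^sup>2) = s * P / 2 * (w1 x)\<^sup>2" using Qpos by simp
      have e2: "(s * Q / 2) * ((w2 x)\<^sup>2 / (P / Q)) = s * Q\<^sup>2 / (2 * P) * (w2 x)\<^sup>2" using Qpos Ppos
        by (simp add: power2_eq_square)
      have "s * Q * \<bar>w1 x * w2 x\<bar> = (s * Q / 2) * (2 * \<bar>w1 x * w2 x\<bar>)" by simp
      also have "\<dots> \<le> (s * Q / 2) * ((P / Q) * (w1 x)\<^sup>2 + (w2 x)\<^sup>2 / (P / Q))" by (rule m)
      also have "\<dots> = s * P / 2 * (w1 x)\<^sup>2 + s * Q\<^sup>2 / (2 * P) * (w2 x)\<^sup>2"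
        by (simp only: distrib_left e1 e2)
      finally show ?thesis .
    qed
    have U0: "s * P * (w1 x)\<^sup>2 + (2 * Q - s) * (w2 x)\<^sup>2 - s * Q * (w1 x * w2 x) \<ge> \<kappa>0 * ?S"
    proof -
      have "s * Q * (w1 x * w2 x) \<le> s * Q * \<bar>w1 x * w2 x\<bar>" using spos Qpos by (simp add: mult_left_mono)
      moreover have "Q * (w2 x)\<^sup>2 \<le> (2 * Q - s - s * Q\<^sup>2 / (2 * P)) * (w2 x)\<^sup>2"
        using skey by (intro mult_right_mono) auto
      moreover have "\<kappa>0 * (w1 x)\<^sup>2 \<le> s * P / 2 * (w1 x)\<^sup>2" by (intro mult_right_mono) (auto simp: \<kappa>0_def)
      moreover have "\<kappa>0 * (w2 x)\<^sup>2 \<le> Q * (w2 x)\<^sup>2" by (intro mult_right_mono) (auto simp: \<kappa>0_def)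
      moreover have "(2 * Q - s - s * Q\<^sup>2 / (2 * P)) * (w2 x)\<^sup>2 = (2 * Q - s) * (w2 x)\<^sup>2 - s * Q\<^sup>2 / (2 * P) * (w2 x)\<^sup>2"
        by (simp add: algebra_simps)
      moreover have "s * P * (w1 x)\<^sup>2 = s * P / 2 * (w1 x)\<^sup>2 + s * P / 2 * (w1 x)\<^sup>2" by simp
      moreover have "\<kappa>0 * ?S = \<kappa>0 * (w1 x)\<^sup>2 + \<kappa>0 * (w2 x)\<^sup>2" by (simp add: distrib_left)
      ultimately show ?thesis using cross by linarith
    qed
    have pert: "\<bar>(2 * w2 x - s * w1 x) * e\<bar> \<le> 2 * (2 + s) * \<epsilon> * ?S"
    proof -
      have "\<bar>e\<bar> \<le> \<bar>p x - P\<bar> * \<bar>w1 x\<bar> + \<bar>q x + Q\<bar> * \<bar>w2 x\<bar>"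
        unfolding e_def by (simp add: abs_mult[symmetric])
      also have "\<dots> \<le> \<epsilon> * \<bar>w1 x\<bar> + \<epsilon> * \<bar>w2 x\<bar>"
        using X1[OF x] by (intro add_mono mult_right_mono) auto
      finally have e1: "\<bar>e\<bar> \<le> \<epsilon> * (\<bar>w1 x\<bar> + \<bar>w2 x\<bar>)" by (simp add: algebra_simps)
      have e2: "\<bar>2 * w2 x - s * w1 x\<bar> \<le> (2 + s) * (\<bar>w1 x\<bar> + \<bar>w2 x\<bar>)"
      proof -
        have "\<bar>2 * w2 x - s * w1 x\<bar> \<le> 2 * \<bar>w2 x\<bar> + s * \<bar>w1 x\<bar>"
          using abs_triangle_ineq4[of "2 * w2 x" "s * w1 x"] spos by (simp add: abs_mult)
        also have "\<dots> \<le> (2 + s) * (\<bar>w1 x\<bar> + \<bar>w2 x\<bar>)" using spos by (simp add: algebra_simps)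
        finally show ?thesis .
      qed
      have "\<bar>(2 * w2 x - s * w1 x) * e\<bar> \<le> ((2 + s) * (\<bar>w1 x\<bar> + \<bar>w2 x\<bar>)) * (\<epsilon> * (\<bar>w1 x\<bar> + \<bar>w2 x\<bar>))"
        unfolding abs_mult using spos by (intro mult_mono e1 e2) auto
      also have "\<dots> = (2 + s) * \<epsilon> * (\<bar>w1 x\<bar> + \<bar>w2 x\<bar>)\<^sup>2" by (simp add: power2_eq_square algebra_simps)
      also have "\<dots> \<le> (2 + s) * \<epsilon> * (2 * ?S)"
      proof (rule mult_left_mono)
        show "(\<bar>w1 x\<bar> + \<bar>w2 x\<bar>)\<^sup>2 \<le> 2 * ?S"
          using sum_sq_le2[of "\<bar>w1 x\<bar>" "\<bar>w2 x\<bar>"] by simp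
      qed (use spos epspos in auto)
      finally show ?thesis by (simp add: algebra_simps)
    qed
    have k: "2 * (2 + s) * \<epsilon> = \<kappa>0 / 2" using spos by (simp add: \<epsilon>_def field_simps)
    then have "\<bar>(2 * w2 x - s * w1 x) * e\<bar> \<le> \<kappa>0 / 2 * ?S" using pert by (simp only: k)
    moreover have "- ((2 * w2 x - s * w1 x) * e) \<le> \<bar>(2 * w2 x - s * w1 x) * e\<bar>" by simp
    moreover have "\<kappa>0 * ?S = \<kappa>0 / 2 * ?S + \<kappa>0 / 2 * ?S" by simp
    ultimately show ?thesis using U0 Hid by linarith
  qed
  have lH: "(H \<longlongrightarrow> 0) at_top" unfolding H_def by (auto intro!: tendsto_eq_intros l1 l2)
  define C where "C = P + 1 + s"
  have Cpos: "C > 0" using Ppos spos by (simp add: C_def)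
  have "H X1 \<le> 0"
  proof (rule ccontr)
    assume "\<not> H X1 \<le> 0"
    then have Hx: "H X1 > 0" by simp
    obtain y where y: "y \<ge> X1" "H y < H X1" using eventually_first[OF lH Hx] by blast
    have "H y \<ge> H X1 * exp ((\<kappa>0 / (2 * C)) * (y - X1))"
    proof (rule exp_growth_ge[OF y(1), of H H'])
      fix t assume t: "X1 \<le> t" "t \<le> y"
      show "(H has_real_derivative H' t) (at t)" using dH t X10 by auto
      have "(\<kappa>0 / (2 * C)) * H t \<le> (\<kappa>0 / (2 * C)) * (C * ((w1 t)\<^sup>2 + (w2 t)\<^sup>2))"
        using Hup[of t] k0 Cpos by (intro mult_left_mono) (auto simp: C_def)
      also have "\<dots> = (\<kappa>0 / 2) * ((w1 t)\<^sup>2 + (w2 t)\<^sup>2)" using Cpos by simp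
      finally show "\<kappa>0 / (2 * C) * H t \<le> H' t" using H'b[of t] t by linarith
    qed
    moreover have "exp ((\<kappa>0 / (2 * C)) * (y - X1)) \<ge> 1" using k0 Cpos y(1) by simp
    ultimately have "H y \<ge> H X1" using Hx by (smt (verit) mult_le_cancel_left1)
    then show False using y(2) by simp
  qed
  then have "P / 2 * (w1 X1)\<^sup>2 + 1 / 2 * (w2 X1)\<^sup>2 \<le> 0" using Hlow[of X1] by linarith
  moreover have "P / 2 * (w1 X1)\<^sup>2 \<ge> 0" "1 / 2 * (w2 X1)\<^sup>2 \<ge> 0" using Ppos by auto
  ultimately have "P / 2 * (w1 X1)\<^sup>2 = 0" "1 / 2 * (w2 X1)\<^sup>2 = 0" by linarith+
  then have "w1 X1 = 0 \<and> w2 X1 = 0" using Ppos by simp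
  then show ?thesis using X10 by blast
qed


locale tw =
  fixes f U V :: "real \<Rightarrow> real" and \<tau> c :: real
  assumes sm: "smooth_fun f" and bi: "bistable f"
    and tpos: "0 < \<tau>" and tlt: "\<tau> < tau_m f"
    and wave: "traveling_wave f \<tau> c U V"
begin

definition "f1 = deriv f"
definition "f2 = deriv (deriv f)"
definition "a0 = 1 - c\<^sup>2 * \<tau>"

lemma f_der: "(f has_real_derivative f1 x) (at x)"
  using sm unfolding smooth_fun_def f1_def
  by (metis DERIV_deriv_iff_real_differentiable funpow_0)

lemma f1_der: "(f1 has_real_derivative f2 x) (at x)"
proof -
  have "((deriv ^^ 1) f) differentiable (at x)" using sm unfolding smooth_fun_def by blast
  then show ?thesis unfolding f1_def f2_def by (simp add: DERIV_deriv_iff_real_differentiable)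
qed

lemma f2_diff: "f2 differentiable (at x)"
proof -
  have "((deriv ^^ 2) f) differentiable (at x)" using sm unfolding smooth_fun_def by blast
  then show ?thesis unfolding f2_def by (simp add: numeral_2_eq_2)
qed

lemma cont_f: "continuous_on UNIV f"
  using f_der by (meson DERIV_continuous continuous_at_imp_continuous_on)
lemma cont_f1: "continuous_on UNIV f1"
  using f1_der by (meson DERIV_continuous continuous_at_imp_continuous_on)
lemma cont_f2: "continuous_on UNIV f2"
  using f2_diff by (meson differentiable_imp_continuous_within continuous_at_imp_continuous_on)
lemma isCont_f: "isCont f x" using f_der DERIV_isCont by blast
lemma isCont_f1: "isCont f1 x" using f1_der DERIV_isCont by blast
lemma isCont_f2: "isCont f2 x" using cont_f2 by (simp add: continuous_on_eq_continuous_at)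

lemma U_der: "(U has_real_derivative deriv U x) (at x)"
  using wave unfolding traveling_wave_def by (simp add: DERIV_deriv_iff_real_differentiable)
lemma V_der: "(V has_real_derivative deriv V x) (at x)"
  using wave unfolding traveling_wave_def by (simp add: DERIV_deriv_iff_real_differentiable)
lemma eq1: "c * deriv U x + deriv V x + f (U x) = 0"
  using wave unfolding traveling_wave_def by blast
lemma eq2: "deriv U x + c * \<tau> * deriv V x - V x = 0"
  using wave unfolding traveling_wave_def by blast
lemma lim_U_bot: "(U \<longlongrightarrow> 0) at_bot" and lim_V_bot: "(V \<longlongrightarrow> 0) at_bot"
  and lim_U_top: "(U \<longlongrightarrow> 1) at_top" and lim_V_top: "(V \<longlongrightarrow> 0) at_top"
  using wave unfolding traveling_wave_def by blast+

lemma a0U: "a0 * deriv U x = V x + c * \<tau> * f (U x)"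
proof -
  have "deriv V x = - f (U x) - c * deriv U x" using eq1[of x] by linarith
  then have "deriv U x + c * \<tau> * (- f (U x) - c * deriv U x) - V x = 0" using eq2[of x] by simp
  then have h: "deriv U x - c * \<tau> * f (U x) - c * c * \<tau> * deriv U x - V x = 0" by (simp add: algebra_simps)
  show ?thesis unfolding a0_def power2_eq_square left_diff_distrib mult_1 using h by linarith
qed

lemma cont_U: "continuous_on UNIV U"
  using U_der by (meson DERIV_continuous continuous_at_imp_continuous_on)
lemma cont_V: "continuous_on UNIV V"
  using V_der by (meson DERIV_continuous continuous_at_imp_continuous_on)

lemma alpha_ex: "\<exists>\<alpha>. 0 < \<alpha> \<and> \<alpha> < 1 \<and> f 0 = 0 \<and> f \<alpha> = 0 \<and> f 1 = 0 \<and>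
      f1 0 < 0 \<and> f1 1 < 0 \<and> 0 < f1 \<alpha>"
  using bi unfolding bistable_def f1_def by blast

lemma f_0: "f 0 = 0" and f_1: "f 1 = 0" and f1_0: "f1 0 < 0" and f1_1: "f1 1 < 0"
  using alpha_ex by auto

lemma tau_f1: "s \<in> {0..1} \<Longrightarrow> \<tau> * \<bar>f1 s\<bar> < 1"
proof -
  assume s: "s \<in> {0..1}"
  define M where "M = (SUP s\<in>{0..1}. \<bar>deriv f s\<bar>)"
  have bdd: "bdd_above ((\<lambda>s. \<bar>deriv f s\<bar>) ` {0..1})"
  proof -
    have "compact ((\<lambda>s. \<bar>f1 s\<bar>) ` {0..1})"
      by (rule compact_continuous_image) (auto intro!: continuous_intros continuous_on_subset[OF cont_f1])
    then show ?thesis unfolding f1_def by (simp add: bounded_imp_bdd_above compact_imp_bounded)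
  qed
  have le: "\<bar>f1 s\<bar> \<le> M" unfolding M_def f1_def using s bdd by (rule cSUP_upper)
  have "\<bar>f1 0\<bar> \<le> M" unfolding M_def f1_def using bdd by (intro cSUP_upper) auto
  then have Mpos: "M > 0" using f1_0 by linarith
  have "\<tau> < 1 / M" using tlt unfolding tau_m_def M_def by simp
  then have "\<tau> * M < 1" using Mpos by (simp add: field_simps)
  moreover have "\<tau> * \<bar>f1 s\<bar> \<le> \<tau> * M" using le tpos by (simp add: mult_left_mono)
  ultimately show ?thesis by linarith
qed

end

lemma isCont_eps:
  fixes g :: "real \<Rightarrow> real"
  assumes "isCont g a" "e > 0"
  shows "\<exists>d>0. \<forall>x. \<bar>x - a\<bar> < d \<longrightarrow> \<bar>g x - g a\<bar> < e"
proof -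
  obtain d where "d > 0" "\<And>x. x \<noteq> a \<and> norm (x - a) < d \<Longrightarrow> norm (g x - g a) < e"
    using LIM_D[OF assms(1)[unfolded isCont_def] assms(2)] by blast
  note dd = this
  show ?thesis
  proof (intro exI[of _ d] conjI allI impI)
    fix x assume x: "\<bar>x - a\<bar> < d"
    show "\<bar>g x - g a\<bar> < e"
    proof (cases "x = a")
      case True then show ?thesis using assms(2) by simp
    next
      case False then show ?thesis using dd(2)[of x] x by simp
    qed
  qed (rule dd(1))
qed

lemma crossing:
  fixes g :: "real \<Rightarrow> real"
  assumes "continuous_on UNIV g" "(g \<longlongrightarrow> A) at_bot" "(g \<longlongrightarrow> B) at_top" "A < y" "y < B"
  shows "\<exists>x. g x = y"
proof -
  obtain M1 where M1: "\<And>x. x \<le> M1 \<Longrightarrow> g x < y"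
    using order_tendstoD(2)[OF assms(2) assms(4)] by (auto simp: eventually_at_bot_linorder)
  obtain M2 where M2: "\<And>x. x \<ge> M2 \<Longrightarrow> g x > y"
    using order_tendstoD(1)[OF assms(3) assms(5)] by (auto simp: eventually_at_top_linorder)
  have "\<exists>x. min M1 M2 \<le> x \<and> x \<le> max M1 M2 \<and> g x = y"
    by (rule IVT') (use M1 M2 continuous_on_subset[OF assms(1)] in \<open>auto intro: less_imp_le\<close>)
  then show ?thesis by blast
qed

context tw begin

lemma U_not_const: "\<not> (\<forall>x. U x = k)"
proof
  assume "\<forall>x. U x = k"
  then have "U = (\<lambda>_::real. k)" by auto
  then have "((\<lambda>_::real. k) \<longlongrightarrow> 0) at_bot" "((\<lambda>_::real. k) \<longlongrightarrow> 1) at_top" using lim_U_bot lim_U_top by auto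
  then have "k = 0" "k = 1"
    using tendsto_const_iff[OF trivial_limit_at_bot_linorder] tendsto_const_iff[OF trivial_limit_at_top_linorder] by metis+
  then show False by simp
qed

lemma a0_nz: "a0 \<noteq> 0"
proof
  assume a0: "a0 = 0"
  obtain \<alpha> where al: "0 < \<alpha>" "\<alpha> < 1" "f \<alpha> = 0"
    using alpha_ex by blast
  have cnz: "c \<noteq> 0" using a0 by (auto simp: a0_def)
  have Vx: "V x = - (c * \<tau> * f (U x))" for x using a0U[of x] a0 by simp
  have dV: "deriv V x = - (c * \<tau> * (f1 (U x) * deriv U x))" for x
  proof -
    have "((\<lambda>x. - (c * \<tau> * f (U x))) has_real_derivative - (c * \<tau> * (f1 (U x) * deriv U x))) (at x)"
      by (auto intro!: derivative_eq_intros DERIV_chain2[OF f_der U_der])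
    moreover have "V = (\<lambda>x. - (c * \<tau> * f (U x)))" using Vx by auto
    ultimately show ?thesis using V_der[of x] DERIV_unique by metis
  qed
  have key: "c * (1 - \<tau> * f1 (U x)) * deriv U x = - f (U x)" for x
    using eq1[of x] dV[of x] by (simp add: algebra_simps)
  obtain x0 where x0: "U x0 = \<alpha>" using crossing[OF cont_U lim_U_bot lim_U_top] al by auto
  define E where "E t = (U t - \<alpha>)\<^sup>2" for t
  define E' where "E' t = 2 * (U t - \<alpha>) * deriv U t" for t
  have dE: "(E has_real_derivative E' t) (at t)" for t
    unfolding E_def E'_def by (auto intro!: derivative_eq_intros U_der simp: power2_eq_square)
  have "E x = 0" for x
  proof (rule zero_all[OF dE])
    show "E t \<ge> 0" for t by (simp add: E_def)
    show "E x0 = 0" using x0 by (simp add: E_def)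
    fix y assume "E y = 0"
    then have Uy: "U y = \<alpha>" by (simp add: E_def)
    define \<kappa> where "\<kappa> = 1 - \<tau> * f1 \<alpha>"
    have kpos: "\<kappa> > 0" using tau_f1[of \<alpha>] al tpos unfolding \<kappa>_def
      by (smt (verit) abs_ge_self atLeastAtMost_iff mult_left_mono)
    obtain \<delta> where dpos: "\<delta> > 0" and d: "\<And>s. \<bar>s - \<alpha>\<bar> < \<delta> \<Longrightarrow> \<bar>f1 s - f1 \<alpha>\<bar> < \<kappa> / (2 * \<tau>)"
      using isCont_eps[OF isCont_f1, of "\<kappa> / (2 * \<tau>)" \<alpha>] kpos tpos by auto
    define K where "K = \<bar>f1 \<alpha>\<bar> + \<kappa> / (2 * \<tau>)"
    have K1: "\<bar>f1 s\<bar> \<le> K" if "\<bar>s - \<alpha>\<bar> < \<delta>" for s using d[OF that] unfolding K_def by linarith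
    have K2: "1 - \<tau> * f1 s \<ge> \<kappa> / 2" if "\<bar>s - \<alpha>\<bar> < \<delta>" for s
    proof -
      have "\<tau> * (f1 s - f1 \<alpha>) \<le> \<tau> * (\<kappa> / (2 * \<tau>))"
        using d[OF that] tpos by (intro mult_left_mono) auto
      moreover have "\<tau> * (\<kappa> / (2 * \<tau>)) = \<kappa> / 2" using tpos by simp
      ultimately have "\<tau> * f1 s \<le> \<tau> * f1 \<alpha> + \<kappa> / 2" by (simp add: right_diff_distrib)
      then show ?thesis unfolding \<kappa>_def by (simp add: field_simps)
    qed
    have Lf: "\<bar>f s\<bar> \<le> K * \<bar>s - \<alpha>\<bar>" if s: "\<bar>s - \<alpha>\<bar> < \<delta>" for s
    proof (cases "s = \<alpha>")
      case True then show ?thesis using al by simp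
    next
      case False
      have "\<exists>z. min s \<alpha> < z \<and> z < max s \<alpha> \<and> f (max s \<alpha>) - f (min s \<alpha>) = (max s \<alpha> - min s \<alpha>) * f1 z"
        by (rule MVT2) (use False f_der in auto)
      then obtain z where z: "min s \<alpha> < z" "z < max s \<alpha>" "f (max s \<alpha>) - f (min s \<alpha>) = (max s \<alpha> - min s \<alpha>) * f1 z" by blast
      have "\<bar>z - \<alpha>\<bar> < \<delta>" using z s by (auto simp: min_def max_def split: if_splits)
      then have "\<bar>f1 z\<bar> \<le> K" by (rule K1)
      moreover have "\<bar>f s\<bar> = \<bar>s - \<alpha>\<bar> * \<bar>f1 z\<bar>"
      proof -
        have "\<bar>f (max s \<alpha>) - f (min s \<alpha>)\<bar> = \<bar>max s \<alpha> - min s \<alpha>\<bar> * \<bar>f1 z\<bar>"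
          using z(3) by (simp add: abs_mult)
        moreover have "\<bar>f (max s \<alpha>) - f (min s \<alpha>)\<bar> = \<bar>f s\<bar>" using al(3)
          by (cases "s \<le> \<alpha>") (auto simp: min_def max_def)
        moreover have "\<bar>max s \<alpha> - min s \<alpha>\<bar> = \<bar>s - \<alpha>\<bar>" by (auto simp: min_def max_def)
        ultimately show ?thesis by simp
      qed
      ultimately show ?thesis by (metis abs_ge_zero mult.commute mult_left_mono)
    qed
    obtain r where rpos: "r > 0" and r: "\<And>t. \<bar>t - y\<bar> < r \<Longrightarrow> \<bar>U t - U y\<bar> < \<delta>"
      using isCont_eps[OF continuous_on_interior[OF cont_U], of y \<delta>] dpos by auto
    have "\<bar>E' t\<bar> \<le> (4 * K / (\<bar>c\<bar> * \<kappa>)) * E t" if t: "\<bar>t - y\<bar> < r" for t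
    proof -
      have Ut: "\<bar>U t - \<alpha>\<bar> < \<delta>" using r[OF t] Uy by simp
      have "\<bar>c\<bar> * (\<kappa> / 2) * \<bar>deriv U t\<bar> \<le> \<bar>c\<bar> * (1 - \<tau> * f1 (U t)) * \<bar>deriv U t\<bar>"
        using K2[OF Ut] by (intro mult_right_mono mult_left_mono) auto
      also have "\<dots> = \<bar>f (U t)\<bar>"
      proof -
        have "\<bar>c * (1 - \<tau> * f1 (U t)) * deriv U t\<bar> = \<bar>f (U t)\<bar>" using key[of t] by simp
        moreover have "1 - \<tau> * f1 (U t) \<ge> 0" using K2[OF Ut] kpos by linarith
        ultimately show ?thesis by (simp add: abs_mult)
      qed
      also have "\<dots> \<le> K * \<bar>U t - \<alpha>\<bar>" by (rule Lf[OF Ut])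
      finally have b: "\<bar>c\<bar> * (\<kappa> / 2) * \<bar>deriv U t\<bar> \<le> K * \<bar>U t - \<alpha>\<bar>" .
      have cpos: "\<bar>c\<bar> * (\<kappa> / 2) > 0" using cnz kpos by simp
      have "\<bar>deriv U t\<bar> \<le> K * \<bar>U t - \<alpha>\<bar> / (\<bar>c\<bar> * (\<kappa> / 2))"
        using b cpos by (simp add: pos_le_divide_eq mult.commute)
      then have m: "2 * \<bar>U t - \<alpha>\<bar> * \<bar>deriv U t\<bar> \<le> 2 * \<bar>U t - \<alpha>\<bar> * (K * \<bar>U t - \<alpha>\<bar> / (\<bar>c\<bar> * (\<kappa> / 2)))"
        by (rule mult_left_mono) simp
      have "\<bar>E' t\<bar> = 2 * \<bar>U t - \<alpha>\<bar> * \<bar>deriv U t\<bar>" unfolding E'_def abs_mult by simp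
      then have "\<bar>E' t\<bar> \<le> 2 * \<bar>U t - \<alpha>\<bar> * (K * \<bar>U t - \<alpha>\<bar> / (\<bar>c\<bar> * (\<kappa> / 2)))"
        using m by simp
      also have "\<dots> = (4 * K / (\<bar>c\<bar> * \<kappa>)) * E t"
        unfolding E_def using cpos by (simp add: field_simps power2_eq_square)
      finally show ?thesis .
    qed
    then show "\<exists>r>0. \<exists>L. \<forall>t. \<bar>t - y\<bar> < r \<longrightarrow> \<bar>E' t\<bar> \<le> L * E t" using rpos by blast
  qed
  then have "\<forall>x. U x = \<alpha>" by (simp add: E_def)
  then show False using U_not_const by blast
qed

end

context tw begin

definition "Pf x = (V x + c * \<tau> * f (U x)) / a0"
definition "P2 x = (- f (U x) - c * Pf x + c * \<tau> * f1 (U x) * Pf x) / a0"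
definition "aa x = f1 (U x)"
definition "aa' x = f2 (U x) * Pf x"
definition "pc x = (aa x - c * \<tau> * aa' x) / a0"
definition "qc x = c * (1 - \<tau> * aa x) / a0"

lemma deriv_U: "deriv U x = Pf x"
  using a0U[of x] a0_nz unfolding Pf_def by (simp add: field_simps)

lemma U_der': "(U has_real_derivative Pf x) (at x)"
  using U_der[of x] deriv_U by simp

lemma deriv_V: "deriv V x = - f (U x) - c * Pf x"
  using eq1[of x] deriv_U[of x] by simp

lemma V_der': "(V has_real_derivative (- f (U x) - c * Pf x)) (at x)"
  using V_der[of x] deriv_V[of x] by simp

lemma Pf_der: "(Pf has_real_derivative P2 x) (at x)"
proof -
  have "((\<lambda>x. V x + c * \<tau> * f (U x)) has_real_derivative (- f (U x) - c * Pf x) + c * \<tau> * (f1 (U x) * Pf x)) (at x)"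
    by (auto intro!: derivative_eq_intros V_der' DERIV_chain2[OF f_der U_der'])
  from DERIV_cdivide[OF this, of a0]
  have d: "((\<lambda>x. (V x + c * \<tau> * f (U x)) / a0) has_real_derivative ((- f (U x) - c * Pf x) + c * \<tau> * (f1 (U x) * Pf x)) / a0) (at x)" .
  have e: "(\<lambda>x. (V x + c * \<tau> * f (U x)) / a0) = Pf" by (rule ext) (simp add: Pf_def)
  from d show ?thesis unfolding e P2_def by (simp add: algebra_simps)
qed

lemma cont_Pf: "continuous_on UNIV Pf"
  using Pf_der by (meson DERIV_continuous continuous_at_imp_continuous_on)

lemma aa_der: "(aa has_real_derivative aa' x) (at x)"
  unfolding aa_def[abs_def] aa'_def using DERIV_chain2[OF f1_der U_der'] by simp

lemma P2_der: "(P2 has_real_derivative (- (pc x * Pf x) - qc x * P2 x)) (at x)"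
proof -
  have "((\<lambda>x. - f (U x) - c * Pf x + c * \<tau> * (aa x * Pf x)) has_real_derivative
      - (f1 (U x) * Pf x) - c * P2 x + c * \<tau> * (aa' x * Pf x + aa x * P2 x)) (at x)"
    by (auto intro!: derivative_eq_intros DERIV_chain2[OF f_der U_der'] Pf_der aa_der simp: algebra_simps)
  from DERIV_cdivide[OF this, of a0]
  have d: "((\<lambda>x. (- f (U x) - c * Pf x + c * \<tau> * (aa x * Pf x)) / a0) has_real_derivative
      (- (f1 (U x) * Pf x) - c * P2 x + c * \<tau> * (aa' x * Pf x + aa x * P2 x)) / a0) (at x)" .
  have e: "(\<lambda>x. (- f (U x) - c * Pf x + c * \<tau> * (aa x * Pf x)) / a0) = P2"
    by (rule ext) (simp add: P2_def aa_def algebra_simps)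
  have "(- (f1 (U x) * Pf x) - c * P2 x + c * \<tau> * (aa' x * Pf x + aa x * P2 x)) / a0
      = - (pc x * Pf x) - qc x * P2 x"
    unfolding pc_def qc_def aa_def using a0_nz by (simp add: field_simps)
  with d show ?thesis unfolding e by simp
qed

lemma cont_P2: "continuous_on UNIV P2"
  using P2_der by (meson DERIV_continuous continuous_at_imp_continuous_on)

lemma cont_aa: "continuous_on UNIV aa"
  using aa_der by (meson DERIV_continuous continuous_at_imp_continuous_on)

lemma cont_aa': "continuous_on UNIV aa'"
  unfolding aa'_def[abs_def]
  by (intro continuous_intros continuous_on_compose2[OF cont_f2 cont_U] cont_Pf) auto

lemma cont_pc: "continuous_on UNIV pc"
  unfolding pc_def[abs_def] using a0_nz by (intro continuous_intros cont_aa cont_aa') auto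

lemma cont_qc: "continuous_on UNIV qc"
  unfolding qc_def[abs_def] using a0_nz by (intro continuous_intros cont_aa) auto

lemma lim_Pf_top: "(Pf \<longlongrightarrow> 0) at_top"
proof -
  have "((\<lambda>x. (V x + c * \<tau> * f (U x)) / a0) \<longlongrightarrow> (0 + c * \<tau> * f 1) / a0) at_top"
    using a0_nz by (intro tendsto_intros lim_V_top isCont_tendsto_compose[OF isCont_f lim_U_top])
  then show ?thesis unfolding Pf_def[abs_def] using f_1 by simp
qed

lemma lim_Pf_bot: "(Pf \<longlongrightarrow> 0) at_bot"
proof -
  have "((\<lambda>x. (V x + c * \<tau> * f (U x)) / a0) \<longlongrightarrow> (0 + c * \<tau> * f 0) / a0) at_bot"
    using a0_nz by (intro tendsto_intros lim_V_bot isCont_tendsto_compose[OF isCont_f lim_U_bot])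
  then show ?thesis unfolding Pf_def[abs_def] using f_0 by simp
qed

lemma lim_P2_top: "(P2 \<longlongrightarrow> 0) at_top"
proof -
  have "((\<lambda>x. (- f (U x) - c * Pf x + c * \<tau> * f1 (U x) * Pf x) / a0) \<longlongrightarrow> (- f 1 - c * 0 + c * \<tau> * f1 1 * 0) / a0) at_top"
    using a0_nz by (intro tendsto_intros lim_Pf_top isCont_tendsto_compose[OF isCont_f lim_U_top] isCont_tendsto_compose[OF isCont_f1 lim_U_top])
  then show ?thesis unfolding P2_def[abs_def] using f_1 by simp
qed

lemma lim_P2_bot: "(P2 \<longlongrightarrow> 0) at_bot"
proof -
  have "((\<lambda>x. (- f (U x) - c * Pf x + c * \<tau> * f1 (U x) * Pf x) / a0) \<longlongrightarrow> (- f 0 - c * 0 + c * \<tau> * f1 0 * 0) / a0) at_bot"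
    using a0_nz by (intro tendsto_intros lim_Pf_bot isCont_tendsto_compose[OF isCont_f lim_U_bot] isCont_tendsto_compose[OF isCont_f1 lim_U_bot])
  then show ?thesis unfolding P2_def[abs_def] using f_0 by simp
qed

lemma lim_aa_top: "(aa \<longlongrightarrow> f1 1) at_top"
  unfolding aa_def[abs_def] by (rule isCont_tendsto_compose[OF isCont_f1 lim_U_top])
lemma lim_aa_bot: "(aa \<longlongrightarrow> f1 0) at_bot"
  unfolding aa_def[abs_def] by (rule isCont_tendsto_compose[OF isCont_f1 lim_U_bot])
lemma lim_aa'_top: "(aa' \<longlongrightarrow> 0) at_top"
proof -
  have "((\<lambda>x. f2 (U x) * Pf x) \<longlongrightarrow> f2 1 * 0) at_top"
    using a0_nz by (intro tendsto_intros lim_Pf_top isCont_tendsto_compose[OF isCont_f2 lim_U_top])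
  then show ?thesis unfolding aa'_def[abs_def] by simp
qed
lemma lim_aa'_bot: "(aa' \<longlongrightarrow> 0) at_bot"
proof -
  have "((\<lambda>x. f2 (U x) * Pf x) \<longlongrightarrow> f2 0 * 0) at_bot"
    using a0_nz by (intro tendsto_intros lim_Pf_bot isCont_tendsto_compose[OF isCont_f2 lim_U_bot])
  then show ?thesis unfolding aa'_def[abs_def] by simp
qed

lemma lim_pc_top: "(pc \<longlongrightarrow> f1 1 / a0) at_top"
proof -
  have "((\<lambda>x. (aa x - c * \<tau> * aa' x) / a0) \<longlongrightarrow> (f1 1 - c * \<tau> * 0) / a0) at_top"
    using a0_nz by (intro tendsto_intros lim_aa_top lim_aa'_top)
  then show ?thesis unfolding pc_def[abs_def] by simp
qed
lemma lim_pc_bot: "(pc \<longlongrightarrow> f1 0 / a0) at_bot"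
proof -
  have "((\<lambda>x. (aa x - c * \<tau> * aa' x) / a0) \<longlongrightarrow> (f1 0 - c * \<tau> * 0) / a0) at_bot"
    using a0_nz by (intro tendsto_intros lim_aa_bot lim_aa'_bot)
  then show ?thesis unfolding pc_def[abs_def] by simp
qed
lemma lim_qc_top: "(qc \<longlongrightarrow> c * (1 - \<tau> * f1 1) / a0) at_top"
  unfolding qc_def[abs_def] using a0_nz by (intro tendsto_intros lim_aa_top)
lemma lim_qc_bot: "(qc \<longlongrightarrow> c * (1 - \<tau> * f1 0) / a0) at_bot"
  unfolding qc_def[abs_def] using a0_nz by (intro tendsto_intros lim_aa_bot)

lemma zero_point_False:
  assumes "Pf x1 = 0" "P2 x1 = 0"
  shows False
proof -
  have "Pf x = 0" for x
    using lin2_unique[of Pf "\<lambda>_. 0" "\<lambda>_. 1" P2 "\<lambda>x. - pc x" "\<lambda>x. - qc x" x1 x]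
      Pf_der P2_der cont_pc cont_qc assms
    by (auto intro!: continuous_intros)
  then have "U x = U 0" for x using U_der' DERIV_isconst_all by metis
  then show False using U_not_const by blast
qed

end

context tw begin

lemma one_minus_pos: "1 - \<tau> * f1 0 > 0" "1 - \<tau> * f1 1 > 0"
  using tau_f1[of 0] tau_f1[of 1] tpos
  by (smt (verit) abs_ge_self atLeastAtMost_iff mult_left_mono zero_le_one order_refl)+

lemma mirror_tendsto: "(g \<longlongrightarrow> L) at_bot \<Longrightarrow> ((\<lambda>t. g (- t)) \<longlongrightarrow> L) at_top"
  for g :: "real \<Rightarrow> real"
  by (simp add: filterlim_at_bot_mirror)

lemma a0_pos: "a0 > 0"
proof (rule ccontr)
  assume "\<not> a0 > 0"
  then have neg: "a0 < 0" using a0_nz by linarith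
  have cnz: "c \<noteq> 0" using neg by (auto simp: a0_def)
  show False
  proof (cases "c > 0")
    case True
    have Ppos: "f1 1 / a0 > 0" using f1_1 neg by (simp add: divide_neg_neg)
    have Qpos: "- (c * (1 - \<tau> * f1 1) / a0) > 0"
      using True one_minus_pos(2) neg by (simp add: divide_pos_neg mult_pos_pos)
    obtain x where "Pf x = 0 \<and> P2 x = 0"
      using companion_grow[of 0 Pf P2 pc qc "f1 1 / a0" "- (c * (1 - \<tau> * f1 1) / a0)"]
        Pf_der P2_der lim_pc_top lim_qc_top Ppos Qpos lim_Pf_top lim_P2_top by auto
    then show False using zero_point_False by blast
  next
    case False
    then have cneg: "c < 0" using cnz by linarith
    have Ppos: "f1 0 / a0 > 0" using f1_0 neg by (simp add: divide_neg_neg)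
    have Qpos: "c * (1 - \<tau> * f1 0) / a0 > 0"
      using cneg one_minus_pos(1) neg by (simp add: divide_neg_neg mult_neg_pos)
    have d1: "((\<lambda>t. Pf (- t)) has_real_derivative - P2 (- t)) (at t)" for t
      using DERIV_chain2[OF Pf_der DERIV_minus[OF DERIV_ident]] by simp
    have d2: "((\<lambda>t. - P2 (- t)) has_real_derivative
        - (pc (- t) * Pf (- t)) - (- qc (- t)) * (- P2 (- t))) (at t)" for t
    proof -
      have D: "((\<lambda>t. - P2 (- t)) has_real_derivative - ((- (pc (- t) * Pf (- t)) - qc (- t) * P2 (- t)) * - 1)) (at t)"
        by (rule DERIV_minus[OF DERIV_chain2[OF P2_der DERIV_minus[OF DERIV_ident]]])
      have E: "- ((- (pc (- t) * Pf (- t)) - qc (- t) * P2 (- t)) * - 1) = - (pc (- t) * Pf (- t)) - (- qc (- t)) * (- P2 (- t))"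
        by (simp add: algebra_simps)
      show ?thesis using D unfolding E .
    qed
    obtain x where "Pf (- x) = 0 \<and> - P2 (- x) = 0"
      using companion_grow[of 0 "\<lambda>t. Pf (- t)" "\<lambda>t. - P2 (- t)" "\<lambda>t. pc (- t)" "\<lambda>t. - qc (- t)"
          "f1 0 / a0" "c * (1 - \<tau> * f1 0) / a0"]
        d1 d2 mirror_tendsto[OF lim_pc_bot] tendsto_minus[OF mirror_tendsto[OF lim_qc_bot]] Ppos Qpos
        mirror_tendsto[OF lim_Pf_bot] tendsto_minus[OF mirror_tendsto[OF lim_P2_bot]]
      by auto
    then show False using zero_point_False[of "- x"] by auto
  qed
qed

end

lemma int_exp_abs:
  fixes a :: real
  assumes "a > 0"
  shows "integrable lborel (\<lambda>x. exp (- a * \<bar>x\<bar>))"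
proof -
  define h where "h x = indicator {0..} x *\<^sub>R exp (- a * x)" for x :: real
  have hm: "h \<in> borel_measurable borel" unfolding h_def
    by (intro borel_measurable_continuous_on_indicator continuous_intros) auto
  have "integrable lebesgue h" unfolding h_def using assms
    by (intro nonnegative_absolutely_integrable_1 [unfolded set_integrable_def] integrable_on_exp_minus_to_infinity) auto
  then have i1: "integrable lborel h"
    using integrable_completion[of h lborel] hm by simp
  have i2: "integrable lborel (\<lambda>x. h (0 + (- 1) * x))"
    using lborel_integrable_real_affine_iff[of "- 1" h 0] i1 by simp
  have "integrable lborel (\<lambda>x. h x + h (0 + (- 1) * x))" using i1 i2 by simp
  then show ?thesis
  proof (rule Bochner_Integration.integrable_bound)
    show "(\<lambda>x. exp (- a * \<bar>x\<bar>)) \<in> borel_measurable lborel"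
      by measurable
    show "AE x in lborel. norm (exp (- a * \<bar>x\<bar>)) \<le> norm (h x + h (0 + - 1 * x))"
      by (intro AE_I2) (auto simp: h_def indicator_def abs_if)
  qed
qed

definition expdec :: "(real \<Rightarrow> 'a::real_normed_vector) \<Rightarrow> bool" where
  "expdec g \<longleftrightarrow> continuous_on UNIV g \<and>
     (\<exists>K \<kappa> X. \<kappa> > 0 \<and> (\<forall>x. X \<le> \<bar>x\<bar> \<longrightarrow> norm (g x) \<le> K * exp (- \<kappa> * \<bar>x\<bar>)))"

lemma expdecI:
  assumes "continuous_on UNIV g" "\<kappa> > 0" "\<And>x. X \<le> \<bar>x\<bar> \<Longrightarrow> norm (g x) \<le> K * exp (- \<kappa> * \<bar>x\<bar>)"
  shows "expdec g"
  using assms unfolding expdec_def by blast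

lemma cont_bounded_range:
  fixes g :: "real \<Rightarrow> 'a::real_normed_vector"
  assumes "continuous_on UNIV g" "\<And>x. X \<le> \<bar>x\<bar> \<Longrightarrow> norm (g x) \<le> B"
  shows "bounded (range g)"
proof -
  have "compact (g ` {-X..X})" by (rule compact_continuous_image[OF continuous_on_subset[OF assms(1)]]) auto
  then obtain M where M: "\<And>y. y \<in> g ` {-X..X} \<Longrightarrow> norm y \<le> M"
    using compact_imp_bounded bounded_iff by metis
  have "norm (g x) \<le> max M B" for x
  proof (cases "X \<le> \<bar>x\<bar>")
    case True then show ?thesis using assms(2) by force
  next
    case False then have "x \<in> {-X..X}" by auto
    then show ?thesis using M by force
  qed
  then show ?thesis unfolding bounded_iff by blast
qed

lemma expdec_bounded:
  assumes "expdec g"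
  shows "bounded (range g)"
proof -
  obtain K \<kappa> X where k: "\<kappa> > 0" and b: "\<And>x. X \<le> \<bar>x\<bar> \<Longrightarrow> norm (g x) \<le> K * exp (- \<kappa> * \<bar>x\<bar>)"
    using assms unfolding expdec_def by blast
  have "norm (g x) \<le> \<bar>K\<bar>" if "X \<le> \<bar>x\<bar>" for x
  proof -
    have "K * exp (- \<kappa> * \<bar>x\<bar>) \<le> \<bar>K\<bar> * exp (- \<kappa> * \<bar>x\<bar>)" by (simp add: mult_right_mono)
    also have "\<dots> \<le> \<bar>K\<bar> * 1" using k by (intro mult_left_mono) auto
    finally show ?thesis using b[OF that] by simp
  qed
  then show ?thesis using cont_bounded_range assms unfolding expdec_def by blast
qed

lemma expdec_L2:
  fixes g :: "real \<Rightarrow> 'a::{banach, second_countable_topology}"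
  assumes "expdec g"
  shows "L2 g"
proof -
  have cont: "continuous_on UNIV g" using assms unfolding expdec_def by blast
  obtain K \<kappa> X where k: "\<kappa> > 0" and b: "\<And>x. X \<le> \<bar>x\<bar> \<Longrightarrow> norm (g x) \<le> K * exp (- \<kappa> * \<bar>x\<bar>)"
    using assms unfolding expdec_def by blast
  obtain M where M: "\<And>x. norm (g x) \<le> M" using expdec_bounded[OF assms] by (auto simp: bounded_iff)
  have meas: "g \<in> borel_measurable lborel" using borel_measurable_continuous_onI[OF cont] by simp
  have "integrable lborel (\<lambda>x. M\<^sup>2 * indicator {-X..X} x + K\<^sup>2 * exp (- (2 * \<kappa>) * \<bar>x\<bar>))"
  proof (intro Bochner_Integration.integrable_add integrable_mult_right)
    show "integrable lborel (\<lambda>x. exp (- (2 * \<kappa>) * \<bar>x\<bar>))" using k by (intro int_exp_abs) simp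
    show "integrable lborel (indicat_real {- X..X})" by (intro integrable_real_indicator) (auto simp: emeasure_lborel_Icc_eq)
  qed
  then have "integrable lborel (\<lambda>x. (norm (g x))\<^sup>2)"
  proof (rule Bochner_Integration.integrable_bound)
    show "(\<lambda>x. (norm (g x))\<^sup>2) \<in> borel_measurable lborel" using meas by measurable
    show "AE x in lborel. norm ((norm (g x))\<^sup>2) \<le> norm (M\<^sup>2 * indicator {-X..X} x + K\<^sup>2 * exp (- (2 * \<kappa>) * \<bar>x\<bar>))"
    proof (intro AE_I2)
      fix x
      have nn: "0 \<le> M\<^sup>2 * indicator {-X..X} x + K\<^sup>2 * exp (- (2 * \<kappa>) * \<bar>x\<bar>)" by (simp add: indicator_def)
      have "(norm (g x))\<^sup>2 \<le> M\<^sup>2 * indicator {-X..X} x + K\<^sup>2 * exp (- (2 * \<kappa>) * \<bar>x\<bar>)"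
      proof (cases "X \<le> \<bar>x\<bar>")
        case True
        have "(norm (g x))\<^sup>2 \<le> (K * exp (- \<kappa> * \<bar>x\<bar>))\<^sup>2" using b[OF True] by (intro power_mono) auto
        also have "\<dots> = K\<^sup>2 * exp (- (2 * \<kappa>) * \<bar>x\<bar>)"
          by (simp add: power_mult_distrib power2_eq_square flip: exp_add)
        also have "\<dots> \<le> M\<^sup>2 * indicator {-X..X} x + K\<^sup>2 * exp (- (2 * \<kappa>) * \<bar>x\<bar>)"
          by (simp add: indicator_def)
        finally show ?thesis .
      next
        case False
        then have "x \<in> {-X..X}" by auto
        then have "(norm (g x))\<^sup>2 \<le> M\<^sup>2 * indicator {-X..X} x"
          using M[of x] by (simp add: power_mono)
        also have "\<dots> \<le> M\<^sup>2 * indicator {-X..X} x + K\<^sup>2 * exp (- (2 * \<kappa>) * \<bar>x\<bar>)" by simp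
        finally show ?thesis .
      qed
      then show "norm ((norm (g x))\<^sup>2) \<le> norm (M\<^sup>2 * indicator {-X..X} x + K\<^sup>2 * exp (- (2 * \<kappa>) * \<bar>x\<bar>))"
        using nn by simp
    qed
  qed
  then show ?thesis unfolding L2_def using meas by simp
qed


lemma expdec_add:
  assumes "expdec g1" "expdec g2"
  shows "expdec (\<lambda>x. g1 x + g2 x)"
proof -
  obtain K1 k1 X1 where k1: "k1 > 0" and b1: "\<And>x. X1 \<le> \<bar>x\<bar> \<Longrightarrow> norm (g1 x) \<le> K1 * exp (- k1 * \<bar>x\<bar>)"
    using assms(1) unfolding expdec_def by blast
  obtain K2 k2 X2 where k2: "k2 > 0" and b2: "\<And>x. X2 \<le> \<bar>x\<bar> \<Longrightarrow> norm (g2 x) \<le> K2 * exp (- k2 * \<bar>x\<bar>)"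
    using assms(2) unfolding expdec_def by blast
  have c: "continuous_on UNIV (\<lambda>x. g1 x + g2 x)" using assms unfolding expdec_def by (auto intro!: continuous_intros)
  define k where "k = min k1 k2"
  have le: "K * exp (- k' * \<bar>x\<bar>) \<le> \<bar>K\<bar> * exp (- k * \<bar>x\<bar>)" if "k \<le> k'" for K k' x
  proof -
    have "K * exp (- k' * \<bar>x\<bar>) \<le> \<bar>K\<bar> * exp (- k' * \<bar>x\<bar>)" by (simp add: mult_right_mono)
    also have "\<dots> \<le> \<bar>K\<bar> * exp (- k * \<bar>x\<bar>)" using that by (intro mult_left_mono) (auto intro: mult_right_mono)
    finally show ?thesis .
  qed
  show ?thesis
  proof (rule expdecI[OF c, of k "max X1 X2" "\<bar>K1\<bar> + \<bar>K2\<bar>"])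
    show "k > 0" using k1 k2 by (simp add: k_def)
    fix x assume x: "max X1 X2 \<le> \<bar>x\<bar>"
    have "norm (g1 x + g2 x) \<le> norm (g1 x) + norm (g2 x)" by (rule norm_triangle_ineq)
    also have "\<dots> \<le> K1 * exp (- k1 * \<bar>x\<bar>) + K2 * exp (- k2 * \<bar>x\<bar>)" using b1 b2 x by (intro add_mono) auto
    also have "\<dots> \<le> \<bar>K1\<bar> * exp (- k * \<bar>x\<bar>) + \<bar>K2\<bar> * exp (- k * \<bar>x\<bar>)"
      by (intro add_mono le) (auto simp: k_def)
    finally show "norm (g1 x + g2 x) \<le> (\<bar>K1\<bar> + \<bar>K2\<bar>) * exp (- k * \<bar>x\<bar>)" by (simp add: algebra_simps)
  qed
qed

lemma expdec_scale:
  fixes h :: "real \<Rightarrow> real"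
  assumes "expdec g" "continuous_on UNIV h" "\<And>x. \<bar>h x\<bar> \<le> B"
  shows "expdec (\<lambda>x. h x *\<^sub>R g x)"
proof -
  obtain K k X where k: "k > 0" and b: "\<And>x. X \<le> \<bar>x\<bar> \<Longrightarrow> norm (g x) \<le> K * exp (- k * \<bar>x\<bar>)"
    using assms(1) unfolding expdec_def by blast
  have c: "continuous_on UNIV (\<lambda>x. h x *\<^sub>R g x)" using assms unfolding expdec_def by (auto intro!: continuous_intros)
  show ?thesis
  proof (rule expdecI[OF c k, of X "B * K"])
    fix x assume x: "X \<le> \<bar>x\<bar>"
    have "norm (h x *\<^sub>R g x) = \<bar>h x\<bar> * norm (g x)" by simp
    also have "\<dots> \<le> B * (K * exp (- k * \<bar>x\<bar>))"
      using assms(3)[of x] b[OF x] by (intro mult_mono) auto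
    finally show "norm (h x *\<^sub>R g x) \<le> B * K * exp (- k * \<bar>x\<bar>)" by (simp add: mult.assoc)
  qed
qed

lemma expdec_of_real:
  fixes g :: "real \<Rightarrow> real"
  assumes "expdec g"
  shows "expdec (\<lambda>x. complex_of_real (g x))"
  using assms unfolding expdec_def by (auto intro!: continuous_intros)

lemma expdec_vec2:
  fixes g1 g2 :: "real \<Rightarrow> 'a::real_normed_vector"
  assumes "expdec g1" "expdec g2"
  shows "expdec (\<lambda>x. (\<chi> i::2. if i = 1 then g1 x else g2 x))"
proof -
  have "expdec (\<lambda>x. norm (g1 x) + norm (g2 x))"
    using expdec_add[of "\<lambda>x. norm (g1 x)" "\<lambda>x. norm (g2 x)"] assms
    unfolding expdec_def by (auto intro!: continuous_intros)
  then obtain K k X where k: "k > 0" and b: "\<And>x. X \<le> \<bar>x\<bar> \<Longrightarrow> norm (norm (g1 x) + norm (g2 x)) \<le> K * exp (- k * \<bar>x\<bar>)"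
    unfolding expdec_def by blast
  have c: "continuous_on UNIV (\<lambda>x. (\<chi> i::2. if i = 1 then g1 x else g2 x))"
  proof (rule continuous_on_vec_lambda)
    fix i :: 2
    show "continuous_on UNIV (\<lambda>x. if i = 1 then g1 x else g2 x)"
      using assms unfolding expdec_def by (cases "i = 1") auto
  qed
  show ?thesis
  proof (rule expdecI[OF c k, of X K])
    fix x assume x: "X \<le> \<bar>x\<bar>"
    have "norm (\<chi> i::2. if i = 1 then g1 x else g2 x) \<le> (\<Sum>i\<in>UNIV. norm ((\<chi> i::2. if i = 1 then g1 x else g2 x) $ i))"
      unfolding norm_vec_def by (rule L2_set_le_sum) simp
    also have "\<dots> = norm (g1 x) + norm (g2 x)" by (simp add: sum_2)
    also have "\<dots> \<le> K * exp (- k * \<bar>x\<bar>)" using b[OF x] by simp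
    finally show "norm (\<chi> i::2. if i = 1 then g1 x else g2 x) \<le> K * exp (- k * \<bar>x\<bar>)" .
  qed
qed

lemma vec2_has_vector_derivative:
  fixes y :: "real \<Rightarrow> 'a::real_normed_vector ^ 2"
  assumes "((\<lambda>t. y t $ 1) has_vector_derivative D $ 1) (at x)"
    and "((\<lambda>t. y t $ 2) has_vector_derivative D $ 2) (at x)"
  shows "(y has_vector_derivative D) (at x)"
proof -
  have comp: "((\<lambda>t. (y t $ i - y x $ i - (t - x) *\<^sub>R D $ i) /\<^sub>R norm (t - x)) \<longlongrightarrow> 0) (at x)" for i :: 2
  proof -
    have "((\<lambda>t. y t $ i) has_vector_derivative D $ i) (at x)"
      using assms exhaust_2[of i] by auto
    then show ?thesis unfolding has_vector_derivative_def has_derivative_at_within by simp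
  qed
  have "((\<lambda>t. \<chi> i. (y t $ i - y x $ i - (t - x) *\<^sub>R D $ i) /\<^sub>R norm (t - x)) \<longlongrightarrow> (\<chi> i. 0)) (at x)"
    by (rule tendsto_vec_lambda) (rule comp)
  moreover have "(\<lambda>t. \<chi> i. (y t $ i - y x $ i - (t - x) *\<^sub>R D $ i) /\<^sub>R norm (t - x))
      = (\<lambda>t. (y t - y x - (t - x) *\<^sub>R D) /\<^sub>R norm (t - x))"
    by (rule ext) (simp add: vec_eq_iff)
  ultimately have "((\<lambda>t. (y t - y x - (t - x) *\<^sub>R D) /\<^sub>R norm (t - x)) \<longlongrightarrow> 0) (at x)"
    by (simp add: zero_vec_def)
  then show ?thesis unfolding has_vector_derivative_def has_derivative_at_within
    by (simp add: bounded_linear_scaleR_left)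
qed

lemma vec_nth_has_vector_derivative:
  fixes y :: "real \<Rightarrow> 'a::real_normed_vector ^ 'n"
  assumes "(y has_vector_derivative D) (at x)"
  shows "((\<lambda>t. y t $ i) has_vector_derivative D $ i) (at x)"
  using bounded_linear.has_vector_derivative[OF bounded_linear_vec_nth assms] .


lemma lint_eq_interval:
  fixes h :: "real \<Rightarrow> 'a::euclidean_space"
  assumes "continuous_on UNIV h" "\<And>x. x \<notin> {a..b} \<Longrightarrow> h x = 0"
  shows "(LINT x|lborel. h x) = integral {a..b} h"
proof -
  have "(\<lambda>x. h x) = (\<lambda>x. indicator {a..b} x *\<^sub>R h x)"
    using assms(2) by (auto simp: indicator_def)
  then have "(LINT x|lborel. h x) = (LINT x : {a..b} | lborel. h x)"
    unfolding set_lebesgue_integral_def by metis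
  also have "\<dots> = integral {a..b} h"
    by (rule set_borel_integral_eq_integral(2)[OF borel_integrable_atLeastAtMost'])
       (rule continuous_on_subset[OF assms(1)], simp)
  finally show ?thesis .
qed

lemma classical_weak_deriv:
  fixes g g' :: "real \<Rightarrow> 'a::euclidean_space"
  assumes der: "\<And>x. (g has_vector_derivative g' x) (at x)" and cg': "continuous_on UNIV g'"
  shows "weak_deriv g g'"
  unfolding weak_deriv_def
proof (intro allI impI)
  fix \<phi> :: "real \<Rightarrow> real"
  assume tf: "test_fun \<phi>"
  have sm: "smooth_fun \<phi>" and cpt: "compact (closure {x. \<phi> x \<noteq> 0})" using tf unfolding test_fun_def by auto
  have phider: "(\<phi> has_real_derivative deriv \<phi> x) (at x)" for x
    using sm unfolding smooth_fun_def by (metis DERIV_deriv_iff_real_differentiable funpow_0)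
  have dd: "(deriv \<phi>) differentiable (at x)" for x
  proof -
    have "((deriv ^^ 1) \<phi>) differentiable (at x)" using sm unfolding smooth_fun_def by blast
    then show ?thesis by simp
  qed
  have cphi: "continuous_on UNIV \<phi>" using phider by (meson DERIV_continuous continuous_at_imp_continuous_on)
  have cdphi: "continuous_on UNIV (deriv \<phi>)" using dd
    by (meson differentiable_imp_continuous_within continuous_at_imp_continuous_on)
  have cg: "continuous_on UNIV g" using der
    by (meson has_vector_derivative_continuous continuous_at_imp_continuous_on)
  obtain B where B: "\<And>x. x \<in> closure {x. \<phi> x \<noteq> 0} \<Longrightarrow> norm x \<le> B"
    using compact_imp_bounded[OF cpt] bounded_iff by metis
  have phi0: "\<phi> x = 0" if "\<bar>x\<bar> > B" for x
    using B[of x] closure_subset[of "{x. \<phi> x \<noteq> 0}"] that by force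
  have dphi0: "deriv \<phi> x = 0" if x: "\<bar>x\<bar> > B" for x
  proof -
    have op: "open {y::real. B < \<bar>y\<bar>}"
      by (rule open_Collect_less) (auto intro!: continuous_intros)
    have "((\<lambda>_. 0) has_real_derivative 0) (at x)" by simp
    then have "(\<phi> has_real_derivative 0) (at x)"
      by (rule has_field_derivative_transform_within_open[of _ _ _ "{y. \<bar>y\<bar> > B}"])
         (use x phi0 op in auto)
    then show ?thesis using phider[of x] DERIV_unique by blast
  qed
  define a where "a = - \<bar>B\<bar> - 1"
  define b where "b = \<bar>B\<bar> + 1"
  have ab: "a \<le> b" by (simp add: a_def b_def)
  have out: "\<bar>x\<bar> > B" if "x \<notin> {a..b}" for x using that by (auto simp: a_def b_def)
  have pa: "\<phi> a = 0" "\<phi> b = 0" using phi0 by (auto simp: a_def b_def)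
  define I where "I = integral {a..b} (\<lambda>x. \<phi> x *\<^sub>R g' x)"
  have hI: "((\<lambda>x. \<phi> x *\<^sub>R g' x) has_integral I) {a..b}"
    unfolding I_def
    by (intro integrable_integral integrable_continuous_interval continuous_intros continuous_on_subset[OF cphi]
        continuous_on_subset[OF cg']) auto
  have "((\<lambda>x. deriv \<phi> x *\<^sub>R g x) has_integral (- I)) {a..b}"
  proof (rule integration_by_parts[OF bounded_bilinear_scaleR ab])
    show "continuous_on {a..b} \<phi>" by (rule continuous_on_subset[OF cphi]) auto
    show "continuous_on {a..b} g" by (rule continuous_on_subset[OF cg]) auto
    show "(\<phi> has_vector_derivative deriv \<phi> x) (at x)" for x
      using phider[of x] by (simp add: has_real_derivative_iff_has_vector_derivative)
    show "(g has_vector_derivative g' x) (at x)" for x by (rule der)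
    show "((\<lambda>x. \<phi> x *\<^sub>R g' x) has_integral \<phi> b *\<^sub>R g b - \<phi> a *\<^sub>R g a - - I) {a..b}"
      using hI pa by simp
  qed
  then have i1: "integral {a..b} (\<lambda>x. deriv \<phi> x *\<^sub>R g x) = - I" by (rule integral_unique)
  have "(LINT x|lborel. deriv \<phi> x *\<^sub>R g x) = integral {a..b} (\<lambda>x. deriv \<phi> x *\<^sub>R g x)"
    by (rule lint_eq_interval) (use dphi0 out in \<open>auto intro!: continuous_intros cdphi cg\<close>)
  moreover have "(LINT x|lborel. \<phi> x *\<^sub>R g' x) = I"
    unfolding I_def
    by (rule lint_eq_interval) (use phi0 out in \<open>auto intro!: continuous_intros cphi cg'\<close>)
  ultimately show "(LINT x|lborel. deriv \<phi> x *\<^sub>R g x) = - (LINT x|lborel. \<phi> x *\<^sub>R g' x)"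
    using i1 by simp
qed


lemma expdec_from_sq:
  fixes g :: "real \<Rightarrow> real"
  assumes "continuous_on UNIV g" "\<kappa> > 0" "\<And>x. X \<le> \<bar>x\<bar> \<Longrightarrow> (g x)\<^sup>2 \<le> K * exp (- \<kappa> * \<bar>x\<bar>)"
  shows "expdec g"
proof (rule expdecI[OF assms(1), of "\<kappa> / 2" X "sqrt K"])
  show "\<kappa> / 2 > 0" using assms(2) by simp
  fix x assume x: "X \<le> \<bar>x\<bar>"
  have "\<bar>g x\<bar> = sqrt ((g x)\<^sup>2)" by simp
  also have "\<dots> \<le> sqrt (K * exp (- \<kappa> * \<bar>x\<bar>))" using assms(3)[OF x] by (rule real_sqrt_le_mono)
  also have "\<dots> = sqrt K * sqrt (exp (- \<kappa> * \<bar>x\<bar>))" by (simp add: real_sqrt_mult)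
  also have "sqrt (exp (- \<kappa> * \<bar>x\<bar>)) = exp (- (\<kappa> / 2) * \<bar>x\<bar>)"
  proof -
    have "exp (- \<kappa> * \<bar>x\<bar>) = (exp (- (\<kappa> / 2) * \<bar>x\<bar>))\<^sup>2"
      by (simp add: power2_eq_square flip: exp_add)
    then show ?thesis by simp
  qed
  finally show "norm (g x) \<le> sqrt K * exp (- (\<kappa> / 2) * \<bar>x\<bar>)" by simp
qed

context tw begin

lemma qc_antideriv: "\<exists>F. \<forall>x. (F has_real_derivative qc x) (at x)"
proof -
  have "\<exists>F. \<forall>x::real. - \<infinity> < x \<longrightarrow> x < \<infinity> \<longrightarrow> (F has_vector_derivative qc x) (at x)"
    by (rule einterval_antiderivative) (use cont_qc in \<open>auto simp: continuous_on_eq_continuous_at\<close>)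
  then show ?thesis by (auto simp: has_real_derivative_iff_has_vector_derivative)
qed

definition "Qa = (SOME F. \<forall>x. (F has_real_derivative qc x) (at x))"
definition "Ee x = exp (Qa x)"
definition "eta0 x = Ee x * Pf x"
definition "zeta0 x = - (Ee x * P2 x)"
definition "eta1 x = qc x * eta0 x - zeta0 x"
definition "qc' x = - (c * \<tau> * aa' x) / a0"

lemma Qa_der: "(Qa has_real_derivative qc x) (at x)"
  using someI_ex[OF qc_antideriv] unfolding Qa_def by blast

lemma Ee_der: "(Ee has_real_derivative qc x * Ee x) (at x)"
  unfolding Ee_def[abs_def] by (auto intro!: derivative_eq_intros Qa_der)

lemma Ee_pos: "Ee x > 0" by (simp add: Ee_def)

lemma eta0_der: "(eta0 has_real_derivative eta1 x) (at x)"
proof -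
  have "(eta0 has_real_derivative Ee x * P2 x + qc x * Ee x * Pf x) (at x)"
    unfolding eta0_def[abs_def] by (auto intro!: derivative_eq_intros Ee_der Pf_der)
  then show ?thesis by (simp add: eta1_def eta0_def zeta0_def algebra_simps)
qed

lemma zeta0_der: "(zeta0 has_real_derivative pc x * eta0 x) (at x)"
proof -
  have "(zeta0 has_real_derivative - (Ee x * (- (pc x * Pf x) - qc x * P2 x) + qc x * Ee x * P2 x)) (at x)"
    unfolding zeta0_def[abs_def] by (auto intro!: derivative_eq_intros Ee_der P2_der)
  then show ?thesis by (simp add: eta0_def algebra_simps)
qed

lemma qc_der: "(qc has_real_derivative qc' x) (at x)"
proof -
  have "((\<lambda>x. c * (1 - \<tau> * aa x) / a0) has_real_derivative c * (- (\<tau> * aa' x)) / a0) (at x)"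
    using a0_nz by (auto intro!: derivative_eq_intros aa_der)
  then show ?thesis unfolding qc_def[abs_def] qc'_def using a0_nz by (simp add: mult.assoc)
qed

lemma eta1_der: "(eta1 has_real_derivative qc' x * eta0 x + qc x * eta1 x - pc x * eta0 x) (at x)"
proof -
  have "(eta1 has_real_derivative qc' x * eta0 x + qc x * eta1 x - pc x * eta0 x) (at x)"
    unfolding eta1_def[abs_def] by (auto intro!: derivative_eq_intros qc_der eta0_der zeta0_der simp: eta1_def algebra_simps)
  then show ?thesis .
qed

lemma cont_Ee: "continuous_on UNIV Ee"
  using Ee_der by (meson DERIV_continuous continuous_at_imp_continuous_on)
lemma cont_eta0: "continuous_on UNIV eta0"
  using eta0_der by (meson DERIV_continuous continuous_at_imp_continuous_on)
lemma cont_zeta0: "continuous_on UNIV zeta0"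
  using zeta0_der by (meson DERIV_continuous continuous_at_imp_continuous_on)
lemma cont_eta1: "continuous_on UNIV eta1"
  using eta1_der by (meson DERIV_continuous continuous_at_imp_continuous_on)
lemma cont_qc': "continuous_on UNIV qc'"
  unfolding qc'_def[abs_def] using a0_nz by (intro continuous_intros cont_aa') auto

lemma decay: "\<exists>K \<kappa> X. \<kappa> > 0 \<and> (\<forall>x. X \<le> \<bar>x\<bar> \<longrightarrow> (eta0 x)\<^sup>2 + (zeta0 x)\<^sup>2 \<le> K * exp (- \<kappa> * \<bar>x\<bar>))"
proof -
  have p1: "f1 1 / a0 < 0" using f1_1 a0_pos by (simp add: divide_neg_pos)
  have p0: "f1 0 / a0 < 0" using f1_0 a0_pos by (simp add: divide_neg_pos)
  obtain K1 k1 X1 where k1: "k1 > 0" and b1: "\<And>x. x \<ge> X1 \<Longrightarrow> (Ee x * Pf x)\<^sup>2 + (Ee x * P2 x)\<^sup>2 \<le> K1 * exp (- k1 * x)"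
    using companion_decay[of 0 Pf P2 pc qc Ee "f1 1 / a0" "c * (1 - \<tau> * f1 1) / a0"]
      Pf_der P2_der Ee_der Ee_pos lim_pc_top lim_qc_top p1 lim_Pf_top lim_P2_top by blast
  have d1: "((\<lambda>t. Pf (- t)) has_real_derivative - P2 (- t)) (at t)" for t
    using DERIV_chain2[OF Pf_der DERIV_minus[OF DERIV_ident]] by simp
  have d2: "((\<lambda>t. - P2 (- t)) has_real_derivative
      - (pc (- t) * Pf (- t)) - (- qc (- t)) * (- P2 (- t))) (at t)" for t
  proof -
    have D: "((\<lambda>t. - P2 (- t)) has_real_derivative - ((- (pc (- t) * Pf (- t)) - qc (- t) * P2 (- t)) * - 1)) (at t)"
      by (rule DERIV_minus[OF DERIV_chain2[OF P2_der DERIV_minus[OF DERIV_ident]]])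
    have E: "- ((- (pc (- t) * Pf (- t)) - qc (- t) * P2 (- t)) * - 1) = - (pc (- t) * Pf (- t)) - (- qc (- t)) * (- P2 (- t))"
      by (simp add: algebra_simps)
    show ?thesis using D unfolding E .
  qed
  have dE: "((\<lambda>t. Ee (- t)) has_real_derivative (- qc (- t)) * Ee (- t)) (at t)" for t
    using DERIV_chain2[OF Ee_der DERIV_minus[OF DERIV_ident]] by simp
  have "\<exists>K \<kappa> X. \<kappa> > 0 \<and> (\<forall>x\<ge>X. (Ee (- x) * Pf (- x))\<^sup>2 + (Ee (- x) * - P2 (- x))\<^sup>2 \<le> K * exp (- \<kappa> * x))"
  proof (rule companion_decay[of 0 "\<lambda>t. Pf (- t)" "\<lambda>t. - P2 (- t)" "\<lambda>t. pc (- t)" "\<lambda>t. - qc (- t)" "\<lambda>t. Ee (- t)"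
        "f1 0 / a0" "- (c * (1 - \<tau> * f1 0) / a0)"])
    show "((\<lambda>t. - P2 (- t)) \<longlongrightarrow> 0) at_top"
      using tendsto_minus[OF mirror_tendsto[OF lim_P2_bot]] by simp
  qed (use d1 d2 dE Ee_pos mirror_tendsto[OF lim_pc_bot] tendsto_minus[OF mirror_tendsto[OF lim_qc_bot]] p0
      mirror_tendsto[OF lim_Pf_bot] in auto)
  then obtain K2 k2 X2 where k2: "k2 > 0" and b2: "\<And>x. x \<ge> X2 \<Longrightarrow> (Ee (- x) * Pf (- x))\<^sup>2 + (Ee (- x) * - P2 (- x))\<^sup>2 \<le> K2 * exp (- k2 * x)"
    by blast
  define k where "k = min k1 k2"
  define K where "K = \<bar>K1\<bar> + \<bar>K2\<bar>"
  have le: "K' * exp (- k' * \<bar>x\<bar>) \<le> K * exp (- k * \<bar>x\<bar>)" if "k \<le> k'" "\<bar>K'\<bar> \<le> K" for K' k' x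
  proof -
    have "K' * exp (- k' * \<bar>x\<bar>) \<le> \<bar>K'\<bar> * exp (- k' * \<bar>x\<bar>)" by (simp add: mult_right_mono)
    also have "\<dots> \<le> K * exp (- k * \<bar>x\<bar>)" using that by (intro mult_mono) (auto intro: mult_right_mono)
    finally show ?thesis .
  qed
  show ?thesis
  proof (intro exI conjI allI impI)
    show "k > 0" using k1 k2 by (simp add: k_def)
    fix x assume x: "max (max X1 X2) 0 \<le> \<bar>x\<bar>"
    show "(eta0 x)\<^sup>2 + (zeta0 x)\<^sup>2 \<le> K * exp (- k * \<bar>x\<bar>)"
    proof (cases "x \<ge> 0")
      case True
      then have "(eta0 x)\<^sup>2 + (zeta0 x)\<^sup>2 \<le> K1 * exp (- k1 * \<bar>x\<bar>)"
        using b1[of x] x by (simp add: eta0_def zeta0_def)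
      also have "\<dots> \<le> K * exp (- k * \<bar>x\<bar>)" by (rule le) (auto simp: k_def K_def)
      finally show ?thesis .
    next
      case False
      then have "(eta0 x)\<^sup>2 + (zeta0 x)\<^sup>2 \<le> K2 * exp (- k2 * \<bar>x\<bar>)"
        using b2[of "- x"] x by (simp add: eta0_def zeta0_def)
      also have "\<dots> \<le> K * exp (- k * \<bar>x\<bar>)" by (rule le) (auto simp: k_def K_def)
      finally show ?thesis .
    qed
  qed
qed

lemma expdec_eta0: "expdec eta0" and expdec_zeta0: "expdec zeta0"
proof -
  obtain K k X where k: "k > 0" and b: "\<And>x. X \<le> \<bar>x\<bar> \<Longrightarrow> (eta0 x)\<^sup>2 + (zeta0 x)\<^sup>2 \<le> K * exp (- k * \<bar>x\<bar>)"
    using decay by blast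
  show "expdec eta0"
    by (rule expdec_from_sq[OF cont_eta0 k, of X K]) (use b in \<open>smt (verit) zero_le_power2\<close>)
  show "expdec zeta0"
    by (rule expdec_from_sq[OF cont_zeta0 k, of X K]) (use b in \<open>smt (verit) zero_le_power2\<close>)
qed

end

context tw begin

definition "y0 x = (\<chi> i::2. if i = 1 then complex_of_real (zeta0 x) else complex_of_real (eta0 x))"

lemma y0_1: "y0 x $ 1 = complex_of_real (zeta0 x)" and y0_2: "y0 x $ 2 = complex_of_real (eta0 x)"
  by (simp_all add: y0_def)

lemma coef_a_eq: "coef_a f U = aa"
  by (rule ext) (simp add: coef_a_def aa_def f1_def)

lemma deriv_coef_a: "deriv (coef_a f U) x = aa' x"
  unfolding coef_a_eq using aa_der by (rule DERIV_imp_deriv)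

lemma A_entries:
  "A_mat f \<tau> c U x $ 1 $ 1 = 0" "A_mat f \<tau> c U x $ 1 $ 2 = 1"
  "A_mat f \<tau> c U x $ 2 $ 1 = - complex_of_real (pc x)" "A_mat f \<tau> c U x $ 2 $ 2 = - complex_of_real (qc x)"
proof -
  have a0: "1 - c\<^sup>2 * \<tau> = a0" by (simp add: a0_def)
  have nz: "a0 \<noteq> 0" by (rule a0_nz)
  have e: "A_mat f \<tau> c U x $ i $ j = (1 / a0) *\<^sub>R complex_of_real
        (if i = 1 then (if j = 1 then 0 else a0)
         else (if j = 1 then c * \<tau> * aa' x - aa x else c * (\<tau> * aa x - 1)))" for i j
    unfolding A_mat_def a0 coef_a_eq using DERIV_imp_deriv[OF aa_der] by simp
  show "A_mat f \<tau> c U x $ 1 $ 1 = 0" using e[of 1 1] by simp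
  show "A_mat f \<tau> c U x $ 1 $ 2 = 1" using e[of 1 2] nz by (simp add: scaleR_conv_of_real)
  show "A_mat f \<tau> c U x $ 2 $ 1 = - complex_of_real (pc x)"
  proof -
    have "(1 / a0) * (c * \<tau> * aa' x - aa x) = - pc x" unfolding pc_def using nz by (simp add: field_simps)
    then have "complex_of_real ((1 / a0) * (c * \<tau> * aa' x - aa x)) = complex_of_real (- pc x)" by simp
    then have h: "(1 / a0) *\<^sub>R complex_of_real (c * \<tau> * aa' x - aa x) = - complex_of_real (pc x)"
      by (simp only: scaleR_conv_of_real of_real_mult of_real_minus)
    then show ?thesis using e[of 2 1] by simp
  qed
  show "A_mat f \<tau> c U x $ 2 $ 2 = - complex_of_real (qc x)"
  proof -
    have "(1 / a0) * (c * (\<tau> * aa x - 1)) = - qc x" unfolding qc_def using nz by (simp add: field_simps)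
    then have "complex_of_real ((1 / a0) * (c * (\<tau> * aa x - 1))) = complex_of_real (- qc x)" by simp
    then have h: "(1 / a0) *\<^sub>R complex_of_real (c * (\<tau> * aa x - 1)) = - complex_of_real (qc x)"
      by (simp only: scaleR_conv_of_real of_real_mult of_real_minus)
    then show ?thesis using e[of 2 2] by simp
  qed
qed

lemma Astar_comp:
  fixes y :: "complex ^ 2"
  shows "(conj_transpose (A_mat f \<tau> c U x) *v y) $ 1 = - complex_of_real (pc x) * y $ 2"
    and "(conj_transpose (A_mat f \<tau> c U x) *v y) $ 2 = y $ 1 - complex_of_real (qc x) * y $ 2"
  unfolding conj_transpose_def matrix_vector_mult_def by (simp_all add: sum_2 A_entries)

lemma adjoint_sol_iff:
  "adjoint_sol f \<tau> c U y \<longleftrightarrow>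
    (\<forall>x. ((\<lambda>t. y t $ 1) has_vector_derivative complex_of_real (pc x) * y x $ 2) (at x) \<and>
         ((\<lambda>t. y t $ 2) has_vector_derivative (- y x $ 1 + complex_of_real (qc x) * y x $ 2)) (at x))"
proof
  assume a: "adjoint_sol f \<tau> c U y"
  show "\<forall>x. ((\<lambda>t. y t $ 1) has_vector_derivative complex_of_real (pc x) * y x $ 2) (at x) \<and>
         ((\<lambda>t. y t $ 2) has_vector_derivative (- y x $ 1 + complex_of_real (qc x) * y x $ 2)) (at x)"
  proof
    fix x
    have d: "(y has_vector_derivative - (conj_transpose (A_mat f \<tau> c U x) *v y x)) (at x)"
      using a unfolding adjoint_sol_def by blast
    show "((\<lambda>t. y t $ 1) has_vector_derivative complex_of_real (pc x) * y x $ 2) (at x) \<and>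
         ((\<lambda>t. y t $ 2) has_vector_derivative (- y x $ 1 + complex_of_real (qc x) * y x $ 2)) (at x)"
      using vec_nth_has_vector_derivative[OF d, of 1] vec_nth_has_vector_derivative[OF d, of 2]
      by (simp add: Astar_comp)
  qed
next
  assume a: "\<forall>x. ((\<lambda>t. y t $ 1) has_vector_derivative complex_of_real (pc x) * y x $ 2) (at x) \<and>
         ((\<lambda>t. y t $ 2) has_vector_derivative (- y x $ 1 + complex_of_real (qc x) * y x $ 2)) (at x)"
  show "adjoint_sol f \<tau> c U y"
    unfolding adjoint_sol_def
  proof
    fix x
    show "(y has_vector_derivative - (conj_transpose (A_mat f \<tau> c U x) *v y x)) (at x)"
      by (rule vec2_has_vector_derivative) (use a in \<open>simp_all add: Astar_comp\<close>)
  qed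
qed

lemma y0_adjoint: "adjoint_sol f \<tau> c U y0"
  unfolding adjoint_sol_iff y0_1 y0_2
proof
  fix x
  have "((\<lambda>t. complex_of_real (zeta0 t)) has_vector_derivative complex_of_real (pc x * eta0 x)) (at x)"
    by (rule has_vector_derivative_of_real[OF zeta0_der])
  moreover have "((\<lambda>t. complex_of_real (eta0 t)) has_vector_derivative complex_of_real (eta1 x)) (at x)"
    by (rule has_vector_derivative_of_real[OF eta0_der])
  ultimately show "((\<lambda>t. complex_of_real (zeta0 t)) has_vector_derivative complex_of_real (pc x) * complex_of_real (eta0 x)) (at x) \<and>
      ((\<lambda>t. complex_of_real (eta0 t)) has_vector_derivative - complex_of_real (zeta0 x) + complex_of_real (qc x) * complex_of_real (eta0 x)) (at x)"
    by (simp add: eta1_def)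
qed

lemma expdec_y0: "expdec y0"
  unfolding y0_def[abs_def]
  by (rule expdec_vec2 expdec_of_real expdec_eta0 expdec_zeta0)+

lemma y0_bounded: "bounded (range y0)"
  by (rule expdec_bounded[OF expdec_y0])

lemma Pf_nonzero: "\<exists>x. Pf x \<noteq> 0"
proof (rule ccontr)
  assume "\<not> (\<exists>x. Pf x \<noteq> 0)"
  then have "Pf x = 0" for x by blast
  then have "U x = U 0" for x using U_der' DERIV_isconst_all by metis
  then show False using U_not_const by blast
qed

lemma eta0_nonzero: "(\<lambda>x. y0 x $ 2) \<noteq> (\<lambda>x. 0)"
proof
  assume "(\<lambda>x. y0 x $ 2) = (\<lambda>x. 0)"
  then have "eta0 x = 0" for x by (metis y0_2 of_real_eq_0_iff)
  then have "Pf x = 0" for x using Ee_pos[of x] by (metis eta0_def mult_eq_0_iff less_irrefl)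
  then show False using Pf_nonzero by blast
qed

lemma y0_nonzero: "y0 \<noteq> (\<lambda>x. 0)"
  using eta0_nonzero by auto

end

lemma complex_const_deriv0:
  fixes C :: "real \<Rightarrow> complex"
  assumes "\<And>x. (C has_vector_derivative 0) (at x)"
  shows "C x = C 0"
proof -
  have "Re (C x) = Re (C 0)"
    using DERIV_isconst_all[of "\<lambda>t. Re (C t)" x 0] has_vector_derivative_Re_Im(1)[OF assms] by simp
  moreover have "Im (C x) = Im (C 0)"
    using DERIV_isconst_all[of "\<lambda>t. Im (C t)" x 0] has_vector_derivative_Re_Im(2)[OF assms] by simp
  ultimately show ?thesis by (simp add: complex_eq_iff)
qed

context tw begin

lemma sys_C_const:
  fixes z1 z2 :: "real \<Rightarrow> complex"
  assumes d1: "\<And>x. (z1 has_vector_derivative complex_of_real (pc x) * z2 x) (at x)"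
    and d2: "\<And>x. (z2 has_vector_derivative (- z1 x + complex_of_real (qc x) * z2 x)) (at x)"
  shows "complex_of_real (Pf x) * z1 x + complex_of_real (P2 x) * z2 x
       = complex_of_real (Pf 0) * z1 0 + complex_of_real (P2 0) * z2 0"
proof -
  define C where "C t = complex_of_real (Pf t) * z1 t + complex_of_real (P2 t) * z2 t" for t
  have "(C has_vector_derivative 0) (at t)" for t
  proof -
    have "(C has_vector_derivative
        (complex_of_real (Pf t) * (complex_of_real (pc t) * z2 t) + complex_of_real (P2 t) * z1 t) +
        (complex_of_real (P2 t) * (- z1 t + complex_of_real (qc t) * z2 t) + complex_of_real (- (pc t * Pf t) - qc t * P2 t) * z2 t)) (at t)"
      unfolding C_def[abs_def]
      by (intro has_vector_derivative_add has_vector_derivative_mult has_vector_derivative_of_real d1 d2 Pf_der P2_der)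
    moreover have "(complex_of_real (Pf t) * (complex_of_real (pc t) * z2 t) + complex_of_real (P2 t) * z1 t) +
        (complex_of_real (P2 t) * (- z1 t + complex_of_real (qc t) * z2 t) + complex_of_real (- (pc t * Pf t) - qc t * P2 t) * z2 t) = 0"
      by (simp add: algebra_simps)
    ultimately show ?thesis by simp
  qed
  then show ?thesis using complex_const_deriv0[of C x] unfolding C_def by simp
qed

lemma sys_unique:
  fixes z1 z2 :: "real \<Rightarrow> complex"
  assumes d1: "\<And>x. (z1 has_vector_derivative complex_of_real (pc x) * z2 x) (at x)"
    and d2: "\<And>x. (z2 has_vector_derivative (- z1 x + complex_of_real (qc x) * z2 x)) (at x)"
    and C0: "\<And>x. complex_of_real (Pf x) * z1 x + complex_of_real (P2 x) * z2 x = 0"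
  shows "\<exists>k. \<forall>x. z1 x = k * complex_of_real (zeta0 x) \<and> z2 x = k * complex_of_real (eta0 x)"
proof -
  obtain x0 where x0: "Pf x0 \<noteq> 0" using Pf_nonzero by blast
  have e0: "eta0 x0 \<noteq> 0" using x0 Ee_pos[of x0] by (simp add: eta0_def)
  define k where "k = z2 x0 / complex_of_real (eta0 x0)"
  define w1 where "w1 t = z1 t - k * complex_of_real (zeta0 t)" for t
  define w2 where "w2 t = z2 t - k * complex_of_real (eta0 t)" for t
  have dw1: "(w1 has_vector_derivative complex_of_real 0 * w1 x + complex_of_real (pc x) * w2 x) (at x)" for x
  proof -
    have "(w1 has_vector_derivative complex_of_real (pc x) * z2 x - k * complex_of_real (pc x * eta0 x)) (at x)"
      unfolding w1_def[abs_def]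
      by (intro has_vector_derivative_diff d1 has_vector_derivative_mult_right has_vector_derivative_of_real zeta0_der)
    then show ?thesis by (simp add: w2_def algebra_simps)
  qed
  have dw2: "(w2 has_vector_derivative complex_of_real (- 1) * w1 x + complex_of_real (qc x) * w2 x) (at x)" for x
  proof -
    have "(w2 has_vector_derivative (- z1 x + complex_of_real (qc x) * z2 x) - k * complex_of_real (eta1 x)) (at x)"
      unfolding w2_def[abs_def]
      by (intro has_vector_derivative_diff d2 has_vector_derivative_mult_right has_vector_derivative_of_real eta0_der)
    then show ?thesis by (simp add: w1_def w2_def eta1_def algebra_simps)
  qed
  have w20: "w2 x0 = 0" using e0 by (simp add: w2_def k_def)
  have w10: "w1 x0 = 0"
  proof -
    have "complex_of_real (Pf x0) * z1 x0 = - complex_of_real (P2 x0) * z2 x0" using C0[of x0] by (simp add: add_eq_0_iff)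
    then have z1: "z1 x0 = - complex_of_real (P2 x0) * z2 x0 / complex_of_real (Pf x0)"
      using x0 by (simp add: field_simps)
    have "k * complex_of_real (zeta0 x0) = - complex_of_real (P2 x0) * z2 x0 / complex_of_real (Pf x0)"
      using x0 Ee_pos[of x0] unfolding k_def zeta0_def eta0_def by (simp add: field_simps)
    then show ?thesis unfolding w1_def using z1 by simp
  qed
  have "w1 x = 0 \<and> w2 x = 0" for x
    by (rule lin2c_unique[OF dw1 dw2 _ cont_pc _ cont_qc w10 w20]) (auto intro: continuous_intros)
  then show ?thesis by (intro exI[of _ k]) (auto simp: w1_def w2_def)
qed

lemma bounded_lim_pair:
  fixes z1 z2 :: "real \<Rightarrow> complex"
  assumes "bounded (range z1)" "bounded (range z2)"
  shows "((\<lambda>x. complex_of_real (Pf x) * z1 x + complex_of_real (P2 x) * z2 x) \<longlongrightarrow> 0) at_top"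
proof -
  obtain M1 where M1: "\<And>x. norm (z1 x) \<le> M1" using assms(1) by (auto simp: bounded_iff)
  obtain M2 where M2: "\<And>x. norm (z2 x) \<le> M2" using assms(2) by (auto simp: bounded_iff)
  have "((\<lambda>x. \<bar>Pf x\<bar> * M1 + \<bar>P2 x\<bar> * M2) \<longlongrightarrow> \<bar>0\<bar> * M1 + \<bar>0\<bar> * M2) at_top"
    by (intro tendsto_intros lim_Pf_top lim_P2_top)
  then have l: "((\<lambda>x. \<bar>Pf x\<bar> * M1 + \<bar>P2 x\<bar> * M2) \<longlongrightarrow> 0) at_top" by simp
  show ?thesis
  proof (rule Lim_null_comparison[OF _ l])
    show "\<forall>\<^sub>F x in at_top. norm (complex_of_real (Pf x) * z1 x + complex_of_real (P2 x) * z2 x) \<le> \<bar>Pf x\<bar> * M1 + \<bar>P2 x\<bar> * M2"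
    proof (intro always_eventually allI)
      fix x
      have "norm (complex_of_real (Pf x) * z1 x + complex_of_real (P2 x) * z2 x)
          \<le> norm (complex_of_real (Pf x) * z1 x) + norm (complex_of_real (P2 x) * z2 x)" by (rule norm_triangle_ineq)
      also have "\<dots> = \<bar>Pf x\<bar> * norm (z1 x) + \<bar>P2 x\<bar> * norm (z2 x)" by (simp add: norm_mult)
      also have "\<dots> \<le> \<bar>Pf x\<bar> * M1 + \<bar>P2 x\<bar> * M2" using M1[of x] M2[of x]
        by (intro add_mono mult_left_mono) auto
      finally show "norm (complex_of_real (Pf x) * z1 x + complex_of_real (P2 x) * z2 x) \<le> \<bar>Pf x\<bar> * M1 + \<bar>P2 x\<bar> * M2" .
    qed
  qed
qed

lemma adjoint_unique:
  assumes "adjoint_sol f \<tau> c U y" "bounded (range y)"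
  shows "\<exists>k::complex. \<forall>x. y x = k *s y0 x"
proof -
  have d: "\<And>x. ((\<lambda>t. y t $ 1) has_vector_derivative complex_of_real (pc x) * y x $ 2) (at x)"
    "\<And>x. ((\<lambda>t. y t $ 2) has_vector_derivative (- y x $ 1 + complex_of_real (qc x) * y x $ 2)) (at x)"
    using assms(1) unfolding adjoint_sol_iff by blast+
  define C0 where "C0 = complex_of_real (Pf 0) * y 0 $ 1 + complex_of_real (P2 0) * y 0 $ 2"
  have Cc: "complex_of_real (Pf x) * y x $ 1 + complex_of_real (P2 x) * y x $ 2 = C0" for x
    using sys_C_const[of "\<lambda>t. y t $ 1" "\<lambda>t. y t $ 2" x, OF d] unfolding C0_def by simp
  obtain a where a: "\<And>x. norm (y x) \<le> a" using assms(2) by (auto simp: bounded_iff)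
  have nth: "norm (v $ i) \<le> norm v" for v :: "complex ^ 2" and i
    unfolding norm_vec_def by (rule member_le_L2_set) simp_all
  have "norm (y x $ i) \<le> a" for x i by (rule order_trans[OF nth a])
  then have b1: "bounded (range (\<lambda>t. y t $ 1))" and b2: "bounded (range (\<lambda>t. y t $ 2))"
    by (auto simp: bounded_iff)
  have "((\<lambda>x. complex_of_real (Pf x) * y x $ 1 + complex_of_real (P2 x) * y x $ 2) \<longlongrightarrow> 0) at_top"
    by (rule bounded_lim_pair[OF b1 b2])
  then have "((\<lambda>x::real. C0) \<longlongrightarrow> 0) at_top" using Cc by simp
  then have "C0 = 0" using tendsto_const_iff[OF trivial_limit_at_top_linorder] by blast
  then obtain k where k: "\<And>x. y x $ 1 = k * complex_of_real (zeta0 x) \<and> y x $ 2 = k * complex_of_real (eta0 x)"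
    using sys_unique[of "\<lambda>t. y t $ 1" "\<lambda>t. y t $ 2", OF d] Cc by blast
  have "y x = k *s y0 x" for x
    unfolding vec_eq_iff
  proof
    fix i :: 2
    show "y x $ i = (k *s y0 x) $ i" using k[of x] exhaust_2[of i] by (auto simp: y0_1 y0_2)
  qed
  then show ?thesis by blast
qed

end

lemma bounded_from_limits:
  fixes h :: "real \<Rightarrow> real"
  assumes "continuous_on UNIV h" "(h \<longlongrightarrow> La) at_top" "(h \<longlongrightarrow> Lb) at_bot"
  shows "\<exists>B. \<forall>x. \<bar>h x\<bar> \<le> B"
proof -
  have "eventually (\<lambda>x. dist (h x) La < 1) at_top" using tendsto_iff[THEN iffD1, OF assms(2), rule_format, of 1] by simp
  then obtain N1 where N1: "\<And>x. x \<ge> N1 \<Longrightarrow> dist (h x) La < 1"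
    by (auto simp: eventually_at_top_linorder)
  have "eventually (\<lambda>x. dist (h x) Lb < 1) at_bot" using tendsto_iff[THEN iffD1, OF assms(3), rule_format, of 1] by simp
  then obtain N2 where N2: "\<And>x. x \<le> N2 \<Longrightarrow> dist (h x) Lb < 1"
    by (auto simp: eventually_at_bot_linorder)
  have "norm (h x) \<le> max \<bar>La\<bar> \<bar>Lb\<bar> + 1" if "max N1 (- N2) \<le> \<bar>x\<bar>" for x
  proof (cases "x \<ge> 0")
    case True then have "x \<ge> N1" using that by auto
    then show ?thesis using N1[of x] by (auto simp: dist_real_def)
  next
    case False then have "x \<le> N2" using that by auto
    then show ?thesis using N2[of x] by (auto simp: dist_real_def)
  qed
  then have "bounded (range h)" by (rule cont_bounded_range[OF assms(1)])
  then show ?thesis by (auto simp: bounded_iff)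
qed

context tw begin

lemma coef_a0_eq: "coef_a0 \<tau> c = a0" by (simp add: coef_a0_def a0_def)

lemma coef_a1_eq: "coef_a1 f \<tau> c U = (\<lambda>x. a0 * qc x)"
  by (rule ext) (use a0_nz in \<open>simp add: coef_a1_def coef_a_eq qc_def\<close>)

lemma deriv_coef_a1: "deriv (coef_a1 f \<tau> c U) x = a0 * qc' x"
  unfolding coef_a1_eq by (rule DERIV_imp_deriv) (auto intro!: derivative_eq_intros qc_der)

lemma coef_a2_eq: "coef_a2 f \<tau> c U x = a0 * pc x"
  using a0_nz DERIV_imp_deriv[OF aa_der] by (simp add: coef_a2_def coef_a_eq pc_def)

lemma qc_bounded: "\<exists>B. \<forall>x. \<bar>qc x\<bar> \<le> B"
  by (rule bounded_from_limits[OF cont_qc lim_qc_top lim_qc_bot])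
lemma pc_bounded: "\<exists>B. \<forall>x. \<bar>pc x\<bar> \<le> B"
  by (rule bounded_from_limits[OF cont_pc lim_pc_top lim_pc_bot])
lemma qc'_bounded: "\<exists>B. \<forall>x. \<bar>qc' x\<bar> \<le> B"
proof (rule bounded_from_limits[OF cont_qc'])
  show "(qc' \<longlongrightarrow> - (c * \<tau> * 0) / a0) at_top" unfolding qc'_def[abs_def]
    using a0_nz by (intro tendsto_intros lim_aa'_top)
  show "(qc' \<longlongrightarrow> - (c * \<tau> * 0) / a0) at_bot" unfolding qc'_def[abs_def]
    using a0_nz by (intro tendsto_intros lim_aa'_bot)
qed

lemma Astar_eq:
  assumes "complex_of_real (coef_a0 \<tau> c) * e2
        - complex_of_real (coef_a1 f \<tau> c U x) * e1
        + complex_of_real (coef_a2 f \<tau> c U x - deriv (coef_a1 f \<tau> c U) x) * e = 0"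
  shows "e2 = complex_of_real (qc x) * e1 - complex_of_real (pc x) * e + complex_of_real (qc' x) * e"
proof -
  have h: "complex_of_real a0 * e2 - complex_of_real (a0 * qc x) * e1 + complex_of_real (a0 * pc x - a0 * qc' x) * e = 0"
    using assms unfolding coef_a0_eq deriv_coef_a1 unfolding coef_a1_eq coef_a2_eq .
  have eq3: "a = b - c" if "a - b + c = 0" for a b c :: complex
  proof -
    have "a = (a - b + c) + b - c" by simp
    also have "\<dots> = b - c" using that by simp
    finally show ?thesis .
  qed
  have "complex_of_real a0 * e2 = complex_of_real (a0 * qc x) * e1 - complex_of_real (a0 * pc x - a0 * qc' x) * e"
    by (rule eq3[OF h])
  also have "\<dots> = complex_of_real a0 * (complex_of_real (qc x) * e1 - complex_of_real (pc x) * e + complex_of_real (qc' x) * e)"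
    by (simp add: algebra_simps)
  finally have "complex_of_real a0 * e2 = complex_of_real a0 * (complex_of_real (qc x) * e1 - complex_of_real (pc x) * e + complex_of_real (qc' x) * e)" .
  then show ?thesis using a0_nz by simp
qed

lemma C0_zero_growth:
  fixes \<eta> \<eta>1 :: "real \<Rightarrow> complex"
  assumes d: "\<And>x. (\<eta> has_vector_derivative \<eta>1 x) (at x)"
    and b: "\<And>x. norm (\<eta> x) \<le> M"
    and Cc: "\<And>x. complex_of_real (Pf x) * (complex_of_real (qc x) * \<eta> x - \<eta>1 x) + complex_of_real (P2 x) * \<eta> x = C0"
  shows "C0 = 0"
proof (rule ccontr)
  assume C0: "C0 \<noteq> 0"
  let ?c = "norm C0"
  have cpos: "?c > 0" using C0 by simp
  obtain Bq where Bq: "\<And>x. \<bar>qc x\<bar> \<le> Bq" using qc_bounded by blast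
  have M0: "M \<ge> 0" using b[of 0] norm_ge_zero order_trans by blast
  have "((\<lambda>x. \<bar>Pf x\<bar> * Bq * M + \<bar>P2 x\<bar> * M) \<longlongrightarrow> \<bar>0\<bar> * Bq * M + \<bar>0\<bar> * M) at_top"
    by (intro tendsto_intros lim_Pf_top lim_P2_top)
  then have "eventually (\<lambda>x. \<bar>Pf x\<bar> * Bq * M + \<bar>P2 x\<bar> * M < ?c / 2) at_top"
    using cpos by (intro order_tendstoD(2)) auto
  moreover have "eventually (\<lambda>x. \<bar>Pf x\<bar> < 1) at_top"
    using tendsto_rabs[OF lim_Pf_top] by (intro order_tendstoD(2)) auto
  ultimately have "eventually (\<lambda>x. \<bar>Pf x\<bar> * Bq * M + \<bar>P2 x\<bar> * M < ?c / 2 \<and> \<bar>Pf x\<bar> < 1) at_top"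
    by (rule eventually_conj)
  then obtain X where X: "\<And>x. x \<ge> X \<Longrightarrow> \<bar>Pf x\<bar> * Bq * M + \<bar>P2 x\<bar> * M < ?c / 2 \<and> \<bar>Pf x\<bar> < 1"
    by (auto simp: eventually_at_top_linorder)
  define D where "D x = complex_of_real (Pf x) * complex_of_real (qc x) * \<eta> x + complex_of_real (P2 x) * \<eta> x" for x
  have PD: "complex_of_real (Pf x) * \<eta>1 x = D x - C0" for x
    using Cc[of x] unfolding D_def by (simp add: algebra_simps)
  have Db: "norm (D x) \<le> ?c / 2" if "x \<ge> X" for x
  proof -
    have "norm (D x) \<le> \<bar>Pf x\<bar> * \<bar>qc x\<bar> * norm (\<eta> x) + \<bar>P2 x\<bar> * norm (\<eta> x)"
      unfolding D_def by (rule order_trans[OF norm_triangle_ineq]) (simp add: norm_mult)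
    also have "\<dots> \<le> \<bar>Pf x\<bar> * Bq * M + \<bar>P2 x\<bar> * M"
      using Bq[of x] b[of x] by (intro add_mono mult_mono) auto
    finally show ?thesis using X[OF that] by simp
  qed
  have Pnz: "Pf x \<noteq> 0" if "x \<ge> X" for x
  proof
    assume "Pf x = 0"
    then have "D x = C0" using PD[of x] by simp
    then show False using Db[OF that] cpos by simp
  qed
  define s where "s = sgn (Pf X)"
  have scases: "s = 1 \<or> s = -1" using Pnz[of X] by (simp add: s_def sgn_real_def)
  have sabs: "\<bar>s\<bar> = 1" using scases by auto
  have s2: "s * s = 1" using scases by auto
  have sPX: "s * Pf X > 0" using Pnz[of X] by (simp add: s_def sgn_real_def)
  have sP: "s * Pf x > 0" if xX: "x \<ge> X" for x
  proof (rule ccontr)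
    assume "\<not> s * Pf x > 0"
    then have h1: "- (s * Pf X) \<le> 0" "0 \<le> - (s * Pf x)" using sPX by auto
    have cont: "continuous_on {X..x} (\<lambda>t. - (s * Pf t))"
      by (intro continuous_intros continuous_on_subset[OF cont_Pf]) auto
    obtain t where t: "X \<le> t" "t \<le> x" "- (s * Pf t) = 0"
      using IVT'[of "\<lambda>t. - (s * Pf t)" X 0 x, OF h1 xX cont] by blast
    then have "Pf t = 0" using sabs by auto
    then show False using Pnz[of t] t by auto
  qed
  have sP1: "s * Pf x \<le> 1" if "x \<ge> X" for x
  proof -
    have "\<bar>s * Pf x\<bar> = \<bar>Pf x\<bar>" using sabs by (simp add: abs_mult)
    then show ?thesis using X[OF that] abs_ge_self[of "s * Pf x"] by linarith
  qed
  define g where "g t = s * Re (cnj (- C0) * \<eta> t)" for t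
  define R where "R t = Re (cnj (- C0) * \<eta>1 t)" for t
  have dg: "(g has_real_derivative s * R t) (at t)" for t
  proof -
    have "((\<lambda>t. cnj (- C0) * \<eta> t) has_vector_derivative cnj (- C0) * \<eta>1 t) (at t)"
      by (rule has_vector_derivative_mult_right[OF d])
    from DERIV_cmult[OF has_vector_derivative_Re_Im(1)[OF this], of s]
    show ?thesis unfolding g_def[abs_def] R_def .
  qed
  have Rb: "s * R t \<ge> ?c\<^sup>2 / 2" if t: "t \<ge> X" for t
  proof -
    have "Pf t * R t = Re (cnj (- C0) * (complex_of_real (Pf t) * \<eta>1 t))"
      unfolding R_def by (simp add: algebra_simps)
    also have "\<dots> = Re (cnj (- C0) * (D t - C0))" by (simp add: PD)
    also have "\<dots> = ?c\<^sup>2 - Re (cnj C0 * D t)"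
    proof -
      have "cnj C0 * C0 = complex_of_real (?c\<^sup>2)" using complex_norm_square[of C0] by (simp add: mult.commute)
      then have "Re (cnj C0 * C0) = ?c\<^sup>2" by simp
      moreover have "cnj (- C0) * (D t - C0) = cnj C0 * C0 - cnj C0 * D t" by (simp add: algebra_simps)
      ultimately show ?thesis by simp
    qed
    also have "\<dots> \<ge> ?c\<^sup>2 - ?c * (?c / 2)"
    proof -
      have "Re (cnj C0 * D t) \<le> norm (cnj C0 * D t)" by (rule complex_Re_le_cmod)
      also have "\<dots> = ?c * norm (D t)" by (simp add: norm_mult)
      also have "\<dots> \<le> ?c * (?c / 2)" using Db[OF t] cpos by (intro mult_left_mono) auto
      finally show ?thesis by linarith
    qed
    finally have PR: "Pf t * R t \<ge> ?c\<^sup>2 / 2" by (simp add: power2_eq_square)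
    have e: "(s * Pf t) * (s * R t) = (s * s) * (Pf t * R t)" by (simp only: mult_ac)
    then have "(s * Pf t) * (s * R t) = Pf t * R t" using s2 by simp
    then have prod: "(s * Pf t) * (s * R t) \<ge> ?c\<^sup>2 / 2" using PR by linarith
    have sRpos: "s * R t > 0"
    proof (rule ccontr)
      assume "\<not> s * R t > 0"
      then have "(s * Pf t) * (s * R t) \<le> 0" using sP[OF t] by (simp add: mult_nonneg_nonpos)
      moreover have "?c\<^sup>2 / 2 > 0" using cpos by simp
      ultimately show False using prod by linarith
    qed
    have "(s * Pf t) * (s * R t) \<le> 1 * (s * R t)" using sP1[OF t] sRpos by (intro mult_right_mono) auto
    then show ?thesis using prod by simp
  qed
  define x1 where "x1 = X + 2 * (2 * ?c * M + 1) / ?c\<^sup>2"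
  have x1X: "X \<le> x1" using cpos M0 by (simp add: x1_def)
  have "(\<lambda>t. g t - t * (?c\<^sup>2 / 2)) X \<le> (\<lambda>t. g t - t * (?c\<^sup>2 / 2)) x1"
  proof (rule DERIV_nonneg_imp_nondecreasing[OF x1X])
    fix t assume t: "X \<le> t" "t \<le> x1"
    show "\<exists>y. ((\<lambda>t. g t - t * (?c\<^sup>2 / 2)) has_real_derivative y) (at t) \<and> 0 \<le> y"
      using Rb[OF t(1)] by (intro exI conjI) (auto intro!: derivative_eq_intros dg)
  qed
  then have gx: "g x1 \<ge> g X + (x1 - X) * (?c\<^sup>2 / 2)" by (simp add: algebra_simps diff_divide_distrib)
  have gb: "\<bar>g t\<bar> \<le> ?c * M" for t
  proof -
    have "\<bar>g t\<bar> = \<bar>Re (cnj (- C0) * \<eta> t)\<bar>" unfolding g_def by (simp add: abs_mult sabs)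
    also have "\<dots> \<le> norm (cnj (- C0) * \<eta> t)" by (rule abs_Re_le_cmod)
    also have "\<dots> = ?c * norm (\<eta> t)" by (simp add: norm_mult)
    also have "\<dots> \<le> ?c * M" using b[of t] cpos by (intro mult_left_mono) auto
    finally show ?thesis .
  qed
  have "(x1 - X) * (?c\<^sup>2 / 2) = 2 * ?c * M + 1" using cpos by (simp add: x1_def field_simps)
  then show False using gx gb[of x1] gb[of X] by linarith
qed

lemma Astar_unique:
  assumes "Astar_sol f \<tau> c U \<eta>" "bounded (range \<eta>)"
  shows "\<exists>k::complex. \<forall>x. \<eta> x = k * y0 x $ 2"
proof -
  obtain \<eta>1 \<eta>2 where d1: "\<And>x. (\<eta> has_vector_derivative \<eta>1 x) (at x)"
    and d2: "\<And>x. (\<eta>1 has_vector_derivative \<eta>2 x) (at x)"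
    and eq: "\<And>x. complex_of_real (coef_a0 \<tau> c) * \<eta>2 x
        - complex_of_real (coef_a1 f \<tau> c U x) * \<eta>1 x
        + complex_of_real (coef_a2 f \<tau> c U x - deriv (coef_a1 f \<tau> c U) x) * \<eta> x = 0"
    using assms(1) unfolding Astar_sol_def by blast
  define z1 where "z1 t = complex_of_real (qc t) * \<eta> t - \<eta>1 t" for t
  have dz1: "(z1 has_vector_derivative complex_of_real (pc x) * \<eta> x) (at x)" for x
  proof -
    have "(z1 has_vector_derivative (complex_of_real (qc x) * \<eta>1 x + complex_of_real (qc' x) * \<eta> x) - \<eta>2 x) (at x)"
      unfolding z1_def[abs_def]
      by (intro has_vector_derivative_diff has_vector_derivative_mult has_vector_derivative_of_real qc_der d1 d2)
    then show ?thesis using Astar_eq[OF eq[of x]] by (simp add: algebra_simps)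
  qed
  have dz2: "(\<eta> has_vector_derivative (- z1 x + complex_of_real (qc x) * \<eta> x)) (at x)" for x
    using d1[of x] by (simp add: z1_def)
  obtain M where M: "\<And>x. norm (\<eta> x) \<le> M" using assms(2) by (auto simp: bounded_iff)
  define C0 where "C0 = complex_of_real (Pf 0) * z1 0 + complex_of_real (P2 0) * \<eta> 0"
  have Cc: "complex_of_real (Pf x) * z1 x + complex_of_real (P2 x) * \<eta> x = C0" for x
    using sys_C_const[of z1 \<eta> x, OF dz1 dz2] unfolding C0_def by simp
  have "C0 = 0"
    by (rule C0_zero_growth[OF d1 M]) (use Cc in \<open>simp add: z1_def\<close>)
  then obtain k where k: "\<And>x. z1 x = k * complex_of_real (zeta0 x) \<and> \<eta> x = k * complex_of_real (eta0 x)"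
    using sys_unique[of z1 \<eta>, OF dz1 dz2] Cc by blast
  then show ?thesis by (auto simp: y0_2)
qed

end

context tw begin

definition "eta2 x = qc' x * eta0 x + qc x * eta1 x - pc x * eta0 x"

lemma eta2_der: "(eta1 has_real_derivative eta2 x) (at x)"
  using eta1_der unfolding eta2_def .

lemma expdec_eta1: "expdec eta1"
proof -
  obtain Bq where Bq: "\<And>x. \<bar>qc x\<bar> \<le> Bq" using qc_bounded by blast
  have "expdec (\<lambda>x. qc x *\<^sub>R eta0 x + (- 1) *\<^sub>R zeta0 x)"
    by (intro expdec_add expdec_scale[OF expdec_eta0 cont_qc Bq] expdec_scale[OF expdec_zeta0, of _ 1])
       (auto intro: continuous_intros)
  moreover have "(\<lambda>x. qc x *\<^sub>R eta0 x + (- 1) *\<^sub>R zeta0 x) = eta1" by (rule ext) (simp add: eta1_def)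
  ultimately show ?thesis by simp
qed

lemma expdec_eta2: "expdec eta2"
proof -
  obtain Bq where Bq: "\<And>x. \<bar>qc x\<bar> \<le> Bq" using qc_bounded by blast
  obtain Bp where Bp: "\<And>x. \<bar>pc x\<bar> \<le> Bp" using pc_bounded by blast
  obtain Bq' where Bq': "\<And>x. \<bar>qc' x\<bar> \<le> Bq'" using qc'_bounded by blast
  have "expdec (\<lambda>x. (qc' x *\<^sub>R eta0 x + qc x *\<^sub>R eta1 x) + (- pc x) *\<^sub>R eta0 x)"
    by (intro expdec_add expdec_scale[OF expdec_eta0 cont_qc' Bq'] expdec_scale[OF expdec_eta1 cont_qc Bq]
        expdec_scale[OF expdec_eta0, of _ Bp]) (auto intro: continuous_intros cont_pc simp: Bp)
  moreover have "(\<lambda>x. (qc' x *\<^sub>R eta0 x + qc x *\<^sub>R eta1 x) + (- pc x) *\<^sub>R eta0 x) = eta2"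
    by (rule ext) (simp add: eta2_def)
  ultimately show ?thesis by simp
qed

lemma expdec_pe: "expdec (\<lambda>x. pc x * eta0 x)"
proof -
  obtain Bp where Bp: "\<And>x. \<bar>pc x\<bar> \<le> Bp" using pc_bounded by blast
  show ?thesis using expdec_scale[OF expdec_eta0 cont_pc Bp] by simp
qed

lemma eta_fun: "(\<lambda>x. y0 x $ 2) = (\<lambda>x. complex_of_real (eta0 x))"
  by (simp add: y0_2)

lemma Astar_y0: "Astar_sol f \<tau> c U (\<lambda>x. y0 x $ 2)"
  unfolding Astar_sol_def eta_fun
proof (intro exI allI conjI)
  fix x
  show "((\<lambda>x. complex_of_real (eta0 x)) has_vector_derivative complex_of_real (eta1 x)) (at x)"
    by (rule has_vector_derivative_of_real[OF eta0_der])
  show "((\<lambda>x. complex_of_real (eta1 x)) has_vector_derivative complex_of_real (eta2 x)) (at x)"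
    by (rule has_vector_derivative_of_real[OF eta2_der])
  have r: "a0 * eta2 x - a0 * qc x * eta1 x + (a0 * pc x - a0 * qc' x) * eta0 x = 0"
    by (simp add: eta2_def algebra_simps)
  have "complex_of_real (coef_a0 \<tau> c) * complex_of_real (eta2 x) -
        complex_of_real (coef_a1 f \<tau> c U x) * complex_of_real (eta1 x) +
        complex_of_real (coef_a2 f \<tau> c U x - deriv (coef_a1 f \<tau> c U) x) * complex_of_real (eta0 x)
      = complex_of_real (a0 * eta2 x - a0 * qc x * eta1 x + (a0 * pc x - a0 * qc' x) * eta0 x)"
    unfolding coef_a0_eq deriv_coef_a1 unfolding coef_a1_eq coef_a2_eq by simp
  then show "complex_of_real (coef_a0 \<tau> c) * complex_of_real (eta2 x) -
        complex_of_real (coef_a1 f \<tau> c U x) * complex_of_real (eta1 x) +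
        complex_of_real (coef_a2 f \<tau> c U x - deriv (coef_a1 f \<tau> c U) x) * complex_of_real (eta0 x) = 0"
    using r by simp
qed

lemma eta_bounded: "bounded (range (\<lambda>x. y0 x $ 2))"
  unfolding eta_fun by (rule expdec_bounded[OF expdec_of_real[OF expdec_eta0]])

lemma H2_eta: "H2 (\<lambda>x. y0 x $ 2)"
  unfolding H2_def eta_fun
proof (intro conjI exI)
  show "L2 (\<lambda>x. complex_of_real (eta0 x))" by (rule expdec_L2[OF expdec_of_real[OF expdec_eta0]])
  show "L2 (\<lambda>x. complex_of_real (eta1 x))" by (rule expdec_L2[OF expdec_of_real[OF expdec_eta1]])
  show "L2 (\<lambda>x. complex_of_real (eta2 x))" by (rule expdec_L2[OF expdec_of_real[OF expdec_eta2]])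
  show "weak_deriv (\<lambda>x. complex_of_real (eta0 x)) (\<lambda>x. complex_of_real (eta1 x))"
    by (rule classical_weak_deriv[OF has_vector_derivative_of_real[OF eta0_der]])
       (intro continuous_intros cont_eta1)
  show "weak_deriv (\<lambda>x. complex_of_real (eta1 x)) (\<lambda>x. complex_of_real (eta2 x))"
    by (rule classical_weak_deriv[OF has_vector_derivative_of_real[OF eta2_der]])
       (use expdec_eta2 in \<open>auto simp: expdec_def intro!: continuous_intros\<close>)
qed

definition "y0' x = (\<chi> i::2. if i = 1 then complex_of_real (pc x * eta0 x) else complex_of_real (eta1 x))"

lemma y0_der: "(y0 has_vector_derivative y0' x) (at x)"
proof (rule vec2_has_vector_derivative)
  show "((\<lambda>t. y0 t $ 1) has_vector_derivative y0' x $ 1) (at x)"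
    unfolding y0_1 using has_vector_derivative_of_real[OF zeta0_der, of x] by (simp add: y0'_def)
  show "((\<lambda>t. y0 t $ 2) has_vector_derivative y0' x $ 2) (at x)"
    unfolding y0_2 using has_vector_derivative_of_real[OF eta0_der, of x] by (simp add: y0'_def)
qed

lemma expdec_y0': "expdec y0'"
  unfolding y0'_def[abs_def]
  by (rule expdec_vec2 expdec_of_real expdec_pe expdec_eta1)+

lemma H1_y0: "H1 y0"
  unfolding H1_def
proof (intro conjI exI)
  show "L2 y0" by (rule expdec_L2[OF expdec_y0])
  show "L2 y0'" by (rule expdec_L2[OF expdec_y0'])
  show "weak_deriv y0 y0'"
    by (rule classical_weak_deriv[OF y0_der]) (use expdec_y0' in \<open>simp add: expdec_def\<close>)
qed

lemma main:
  "\<exists>y0 :: real \<Rightarrow> complex^2.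
     adjoint_sol f \<tau> c U y0 \<and> bounded (range y0) \<and> y0 \<noteq> (\<lambda>x. 0) \<and>
     (\<forall>y. adjoint_sol f \<tau> c U y \<and> bounded (range y) \<longrightarrow> (\<exists>k::complex. \<forall>x. y x = k *s y0 x)) \<and>
     H1 y0 \<and>
     H2 (\<lambda>x. y0 x $ 2) \<and>
     Astar_sol f \<tau> c U (\<lambda>x. y0 x $ 2) \<and> bounded (range (\<lambda>x. y0 x $ 2)) \<and>
     (\<lambda>x. y0 x $ 2) \<noteq> (\<lambda>x. 0) \<and>
     (\<forall>\<eta>. Astar_sol f \<tau> c U \<eta> \<and> bounded (range \<eta>) \<longrightarrow>
        (\<exists>k::complex. \<forall>x. \<eta> x = k * y0 x $ 2))"
  using y0_adjoint y0_bounded y0_nonzero adjoint_unique H1_y0 H2_eta Astar_y0 eta_bounded eta0_nonzero Astar_unique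
  by blast

end

theorem corollary3p8:
  fixes f U V :: "real \<Rightarrow> real" and \<tau> c :: real
  assumes "smooth_fun f" and "bistable f"
    and "0 < \<tau>" and "\<tau> < tau_m f"
    and "traveling_wave f \<tau> c U V"
  shows "\<exists>y0 :: real \<Rightarrow> complex^2.
     adjoint_sol f \<tau> c U y0 \<and> bounded (range y0) \<and> y0 \<noteq> (\<lambda>x. 0) \<and>
     (\<forall>y. adjoint_sol f \<tau> c U y \<and> bounded (range y) \<longrightarrow> (\<exists>k::complex. \<forall>x. y x = k *s y0 x)) \<and>
     H1 y0 \<and>
     H2 (\<lambda>x. y0 x $ 2) \<and>
     Astar_sol f \<tau> c U (\<lambda>x. y0 x $ 2) \<and> bounded (range (\<lambda>x. y0 x $ 2)) \<and>
     (\<lambda>x. y0 x $ 2) \<noteq> (\<lambda>x. 0) \<and>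
     (\<forall>\<eta>. Astar_sol f \<tau> c U \<eta> \<and> bounded (range \<eta>) \<longrightarrow>
        (\<exists>k::complex. \<forall>x. \<eta> x = k * y0 x $ 2))"
proof -
  interpret tw f U V \<tau> c using assms by unfold_locales
  show ?thesis by (rule main)
qed


end
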